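(* Let $\Phi(u,v)=P(u)(1-v)F(u,uv)$ for $(u,v)\in\mathbb{D}^2$. Then $\Phi$ satisfies, for $u\ne0$, the inhomogeneous linear PDE $$\frac{\partial\Phi}{\partial u}-\frac{u-q}{P(u)}\,v(1-v)\frac{\partial\Phi}{\partial v}+\mathcal{L}(u,v)=0,$$ where $$\mathcal{L}(u,v)=(1-v)\frac{L(u,uv)}{u}=(1-v)\left(\frac{v}{1-u}+(1+v)E(q,uv)-v(s+1+\rho-uv)\frac{\partial E}{\partial v}(q,uv)\right).$$
   Context: Queueing model: an $M^{[X]}/M/1$ processor-sharing queue with Poisson batch arrivals of rate $\rho>0$, exponential job services of mean $1$, unit capacity shared equally among all jobs present, all random quantities independent; batch sizes geometric $\mathbb{P}(B=b)=(1-q)q^{b-1}$, $b\ge1$, with $q\in(0,1)$, $\rho+q<1$. For $n\ge0,b\ge1$, $\Omega_{n,b}$ is the sojourn time of a tagged batch (arrival to departure of its last job) given $n$ jobs present at its arrival and batch size $b$; $e^*_{n,b}(s)=\mathbb{E}(e^{-s\Omega_{n,b}})$, $\Re(s)\ge0$ fixed and suppressed from notation. $\mathbb{D}$ is the open unit disk; $E(u,v)=\sum_{n\ge0}\sum_{b\ge1}e^*_{n,b}(s)u^nv^b$; $F(u,v)=\frac{E(u,v)-E(q,v)}{u-q}$ for $u\ne q$, $F(q,v)=\frac{\partial E}{\partial u}(q,v)$; $P(u)=u^2-(s+1+\rho+q)u+sq+\rho+q$; $L(u,v)=\frac{v}{1-u}+(u+v)E(q,v)-v(s+1+\rho-v)\frac{\partial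 E}{\partial v}(q,v)$. *)

theory Defs
  imports "HOL-Analysis.Analysis"
begin

text \<open>Sojourn time of a tagged batch in the M^[X]/M/1 PS queue, geometric batches.
  While the tagged batch is present the system is non-empty, so the total event rate is
  constant, rho + 1 (arrivals at rate rho, one service completion at rate 1 shared equally).
  State (m, j): m other jobs, j remaining tagged jobs.  From (m,j), j >= 1:
   - batch arrival of size c+1 (prob. rho/(1+rho) * (1-q) q^c): go to (m+c+1, j);
   - completion of an untagged job (prob. 1/(1+rho) * m/(m+j)): go to (m-1, j);
   - completion of a tagged job (prob. 1/(1+rho) * j/(m+j)): go to (m, j-1).
  hit rho q k m j = probability that the tagged batch leaves at exactly the k-th event.\<close>

primrec hit :: "real \<Rightarrow> real \<Rightarrow> nat \<Rightarrow> nat \<Rightarrow> nat \<Rightarrow> real" where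
  "hit \<rho> q 0 m j = (if j = 0 then 1 else 0)"
| "hit \<rho> q (Suc k) m j =
     (if j = 0 then 0 else
        \<rho> / (1 + \<rho>) * (\<Sum>c. (1 - q) * q ^ c * hit \<rho> q k (m + c + 1) j)
      + 1 / (1 + \<rho>) * (real m / real (m + j) * hit \<rho> q k (m - 1) j
                          + real j / real (m + j) * hit \<rho> q k m (j - 1)))"

text \<open>Laplace--Stieltjes transform e*_{n,b}(s) = E(exp(-s Omega_{n,b})): the sojourn time is
  a sum of N i.i.d. Exp(rho+1) holding times (N = number of events until departure),
  independent of the embedded jump chain, so its LST is E[((1+rho)/(1+rho+s))^N].\<close>

definition estar :: "real \<Rightarrow> real \<Rightarrow> complex \<Rightarrow> nat \<Rightarrow> nat \<Rightarrow> complex" where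
  "estar \<rho> q s n b =
     (\<Sum>k. complex_of_real (hit \<rho> q k n b) * (of_real (1 + \<rho>) / (of_real (1 + \<rho>) + s)) ^ k)"

definition EE :: "real \<Rightarrow> real \<Rightarrow> complex \<Rightarrow> complex \<Rightarrow> complex \<Rightarrow> complex" where
  "EE \<rho> q s u v = (\<Sum>n. \<Sum>b. estar \<rho> q s n (Suc b) * u ^ n * v ^ (Suc b))"

definition FF :: "real \<Rightarrow> real \<Rightarrow> complex \<Rightarrow> complex \<Rightarrow> complex \<Rightarrow> complex" where
  "FF \<rho> q s u v =
     (if u = of_real q then deriv (\<lambda>w. EE \<rho> q s w v) (of_real q)
      else (EE \<rho> q s u v - EE \<rho> q s (of_real q) v) / (u - of_real q))"

definition PP :: "real \<Rightarrow> real \<Rightarrow> complex \<Rightarrow> complex \<Rightarrow> complex" where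
  "PP \<rho> q s u = u\<^sup>2 - (s + 1 + of_real \<rho> + of_real q) * u + s * of_real q + of_real \<rho> + of_real q"

definition LL :: "real \<Rightarrow> real \<Rightarrow> complex \<Rightarrow> complex \<Rightarrow> complex \<Rightarrow> complex" where
  "LL \<rho> q s u v = v / (1 - u) + (u + v) * EE \<rho> q s (of_real q) v
     - v * (s + 1 + of_real \<rho> - v) * deriv (\<lambda>w. EE \<rho> q s (of_real q) w) v"

definition Phi :: "real \<Rightarrow> real \<Rightarrow> complex \<Rightarrow> complex \<Rightarrow> complex \<Rightarrow> complex" where
  "Phi \<rho> q s u v = PP \<rho> q s u * (1 - v) * FF \<rho> q s u (u * v)"

definition calL :: "real \<Rightarrow> real \<Rightarrow> complex \<Rightarrow> complex \<Rightarrow> complex \<Rightarrow> complex" where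
  "calL \<rho> q s u v = (1 - v) * LL \<rho> q s u (u * v) / u"

end

theory Submission
  imports Defs "HOL-Analysis.Analysis"
begin


lemma infsum_eq_suminf_norm:
  fixes f :: "nat \<Rightarrow> 'a::banach"
  assumes "summable (\<lambda>n. norm (f n))"
  shows "infsum f UNIV = suminf f"
proof -
  have "summable f" using assms by (rule summable_norm_cancel)
  then have "f sums suminf f" by (simp add: summable_sums)
  then have "(f has_sum suminf f) UNIV" by (rule norm_summable_imp_has_sum[OF assms])
  then show ?thesis by (simp add: infsumI)
qed

lemma summable_on_suminf_eq:
  fixes f :: "nat \<Rightarrow> 'a::banach"
  assumes "f summable_on UNIV"
  shows "infsum f UNIV = suminf f"
proof -
  have "(f has_sum infsum f UNIV) UNIV" using assms by (rule has_sum_infsum)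
  then have "f sums infsum f UNIV" by (rule has_sum_imp_sums)
  then show ?thesis by (simp add: sums_iff)
qed

lemma dbl_swap2:
  fixes c :: "nat \<Rightarrow> nat \<Rightarrow> 'a::banach"
  assumes rowN: "\<And>n. summable (\<lambda>m. norm (c n m))"
    and colN: "\<And>m. summable (\<lambda>n. norm (c n m))"
    and outer: "summable (\<lambda>n. \<Sum>m. norm (c n m))"
  shows "(\<Sum>n. \<Sum>m. c n m) = (\<Sum>m. \<Sum>n. c n m)"
proof -
  have "(\<lambda>p. norm (c (fst p) (snd p))) summable_on Sigma UNIV (\<lambda>_. UNIV)"
  proof (rule summable_on_SigmaI)
    show "((\<lambda>y. norm (c (fst (x, y)) (snd (x, y)))) has_sum (\<Sum>m. norm (c x m))) UNIV" for x
      using norm_summable_imp_has_sum[of "\<lambda>m. norm (c x m)"] rowN summable_sums by fastforce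
    show "(\<lambda>n. \<Sum>m. norm (c n m)) summable_on UNIV"
    proof -
      have e: "norm (\<Sum>m. norm (c n m)) = (\<Sum>m. norm (c n m))" for n
        using suminf_nonneg[OF rowN[of n]] by simp
      have "summable (\<lambda>n. norm (\<Sum>m. norm (c n m)))"
        unfolding e by (rule outer)
      then show ?thesis by (rule norm_summable_imp_summable_on)
    qed
  qed (rule norm_ge_zero)
  then have S0: "(\<lambda>p. c (fst p) (snd p)) summable_on (UNIV \<times> UNIV)"
    by (rule abs_summable_summable)
  have e1: "(\<lambda>(n,m). c n m) = (\<lambda>p. c (fst p) (snd p))" by (rule ext) (simp only: case_prod_unfold)
  have S: "(\<lambda>(n,m). c n m) summable_on (UNIV \<times> UNIV)" unfolding e1 by (rule S0)
  have e2: "(\<lambda>(x, y). (\<lambda>(n,m). c n m) (y, x)) = (\<lambda>(m,n). c n m)" by (rule ext) (simp only: case_prod_unfold fst_conv snd_conv)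
  have S': "(\<lambda>(m,n). c n m) summable_on (UNIV \<times> UNIV)"
    using S summable_on_swap[of "\<lambda>(n,m). c n m" UNIV UNIV] unfolding e2 by simp
  have r1: "infsum (\<lambda>m. c n m) UNIV = (\<Sum>m. c n m)" for n by (rule infsum_eq_suminf_norm[OF rowN])
  have c1: "infsum (\<lambda>n. c n m) UNIV = (\<Sum>n. c n m)" for m by (rule infsum_eq_suminf_norm[OF colN])
  have rs: "(\<lambda>n. infsum (\<lambda>m. c n m) UNIV) summable_on UNIV"
    by (rule summable_on_Sigma_banach[OF S])
  have cs: "(\<lambda>m. infsum (\<lambda>n. c n m) UNIV) summable_on UNIV"
    by (rule summable_on_Sigma_banach[OF S'])
  have "infsum (\<lambda>n. infsum (\<lambda>m. c n m) UNIV) UNIV = infsum (\<lambda>m. infsum (\<lambda>n. c n m) UNIV) UNIV"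
    by (rule infsum_swap_banach[OF S])
  moreover have "infsum (\<lambda>n. infsum (\<lambda>m. c n m) UNIV) UNIV = (\<Sum>n. \<Sum>m. c n m)"
    using summable_on_suminf_eq[OF rs] r1 by simp
  moreover have "infsum (\<lambda>m. infsum (\<lambda>n. c n m) UNIV) UNIV = (\<Sum>m. \<Sum>n. c n m)"
    using summable_on_suminf_eq[OF cs] c1 by simp
  ultimately show ?thesis by simp
qed

lemma dbl_swap:
  fixes c :: "nat \<Rightarrow> nat \<Rightarrow> 'a::banach"
  assumes bnd: "\<And>n m. norm (c n m) \<le> A n * B m" and sA: "summable A" and sB: "summable B"
    and A0: "\<And>n. A n \<ge> 0" and B0: "\<And>m. B m \<ge> 0"
  shows "(\<Sum>n. \<Sum>m. c n m) = (\<Sum>m. \<Sum>n. c n m)"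
proof (rule dbl_swap2)
  show rowN: "summable (\<lambda>m. norm (c n m))" for n
    by (rule summable_comparison_test'[where g="\<lambda>m. A n * B m"]) (use bnd sB in \<open>auto intro: summable_mult\<close>)
  show "summable (\<lambda>n. norm (c n m))" for m
    by (rule summable_comparison_test'[where g="\<lambda>n. A n * B m"]) (use bnd sA in \<open>auto intro: summable_mult2\<close>)
  have rb: "(\<Sum>m. norm (c n m)) \<le> A n * suminf B" for n
  proof -
    have "(\<Sum>m. norm (c n m)) \<le> (\<Sum>m. A n * B m)"
      by (rule suminf_le) (use bnd rowN sB in \<open>auto intro: summable_mult\<close>)
    also have "\<dots> = A n * suminf B" using sB suminf_mult by blast
    finally show ?thesis .
  qed
  show "summable (\<lambda>n. \<Sum>m. norm (c n m))"
    by (rule summable_comparison_test'[where g="\<lambda>n. A n * suminf B"])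
       (use rb sA in \<open>auto intro: summable_mult2 simp: suminf_nonneg rowN\<close>)
qed


lemma geom_summable_norm:
  fixes x :: complex assumes "norm x < 1"
  shows "summable (\<lambda>n. norm x ^ n)"
  using assms by (simp add: summable_geometric)

lemma nr_summable:
  fixes r :: real assumes "0 \<le> r" "r < 1"
  shows "summable (\<lambda>n. real (Suc n) * r ^ n)"
proof -
  have "summable (\<lambda>n. diffs (\<lambda>_. 1::real) n * r ^ n)"
    by (rule termdiff_converges[where K=1]) (use assms in \<open>auto simp: summable_geometric\<close>)
  then show ?thesis by (simp add: diffs_def)
qed

lemma ps_summable:
  fixes c :: "nat \<Rightarrow> complex" and x :: complex
  assumes "\<And>n. norm (c n) \<le> C" "norm x < 1"
  shows "summable (\<lambda>n. norm (c n * x ^ n))" "summable (\<lambda>n. c n * x ^ n)"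
proof -
  show s: "summable (\<lambda>n. norm (c n * x ^ n))"
  proof (rule summable_comparison_test'[where g="\<lambda>n. C * norm x ^ n"])
    show "summable (\<lambda>n. C * norm x ^ n)" using assms(2) by (intro summable_mult) (simp add: summable_geometric)
    show "norm (norm (c n * x ^ n)) \<le> C * norm x ^ n" for n
      using assms(1)[of n] by (simp add: norm_mult norm_power mult_right_mono)
  qed
  then show "summable (\<lambda>n. c n * x ^ n)" by (rule summable_norm_cancel)
qed

lemma ps_bound:
  fixes c :: "nat \<Rightarrow> complex" and x :: complex
  assumes "\<And>n. norm (c n) \<le> C" "norm x \<le> r" "r < 1"
  shows "norm (\<Sum>n. c n * x ^ n) \<le> C * (\<Sum>n. r ^ n)"
proof -
  have r0: "0 \<le> r" using assms(2) norm_ge_zero order_trans by blast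
  have x1: "norm x < 1" using assms by simp
  have "norm (\<Sum>n. c n * x ^ n) \<le> (\<Sum>n. norm (c n * x ^ n))"
    by (rule summable_norm[OF ps_summable(1)[OF assms(1) x1]])
  also have "\<dots> \<le> (\<Sum>n. C * r ^ n)"
  proof (rule suminf_le)
    show "norm (c n * x ^ n) \<le> C * r ^ n" for n
      unfolding norm_mult norm_power
      by (rule mult_mono[OF assms(1) power_mono[OF assms(2)]]) (use r0 order_trans[OF norm_ge_zero assms(1)[of 0]] in auto)
    show "summable (\<lambda>n. norm (c n * x ^ n))" by (rule ps_summable(1)[OF assms(1) x1])
    have "summable (\<lambda>n. r ^ n)" by (rule summable_geometric) (use r0 assms(3) in auto)
    then show "summable (\<lambda>n. C * r ^ n)" by (rule summable_mult)
  qed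
  also have "\<dots> = C * (\<Sum>n. r ^ n)"
  proof -
    have "summable (\<lambda>n. r ^ n)" by (rule summable_geometric) (use r0 assms(3) in auto)
    then show ?thesis by (rule suminf_mult)
  qed
  finally show ?thesis .
qed

lemma ps_deriv:
  fixes c :: "nat \<Rightarrow> complex" and x :: complex
  assumes "\<And>n. norm (c n) \<le> C" "norm x < 1"
  shows "((\<lambda>x. \<Sum>n. c n * x ^ n) has_field_derivative (\<Sum>n. diffs c n * x ^ n)) (at x)"
proof -
  define K where "K = complex_of_real ((1 + norm x) / 2)"
  have nK: "norm K = (1 + norm x) / 2" unfolding K_def norm_of_real by simp
  have "norm K < 1" using nK assms(2) by simp
  then have "summable (\<lambda>n. c n * K ^ n)" by (rule ps_summable(2)[OF assms(1)])
  moreover have "norm x < norm K" using nK assms(2) by simp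
  ultimately show ?thesis by (rule termdiffs_strong)
qed

lemma diffs_bound:
  fixes c :: "nat \<Rightarrow> complex"
  assumes "\<And>n. norm (c n) \<le> C"
  shows "norm (diffs c n) \<le> C * real (Suc n)"
proof -
  have "norm (diffs c n) = real (Suc n) * norm (c (Suc n))"
    unfolding diffs_def norm_mult by (simp only: norm_of_nat)
  also have "\<dots> \<le> real (Suc n) * C" by (rule mult_left_mono[OF assms]) simp
  finally show ?thesis by (simp add: mult.commute)
qed

lemma dps_bound:
  fixes c :: "nat \<Rightarrow> complex" and x :: complex
  assumes "\<And>n. norm (c n) \<le> C" "norm x \<le> r" "r < 1"
  shows "norm (\<Sum>n. diffs c n * x ^ n) \<le> C * (\<Sum>n. real (Suc n) * r ^ n)"
proof -
  have r0: "0 \<le> r" using assms(2) norm_ge_zero order_trans by blast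
  have C0: "0 \<le> C" using assms(1)[of 0] norm_ge_zero order_trans by blast
  have sr: "summable (\<lambda>n. real (Suc n) * r ^ n)" using nr_summable r0 assms by blast
  have sn: "summable (\<lambda>n. norm (diffs c n * x ^ n))"
  proof (rule summable_comparison_test'[where g="\<lambda>n. C * (real (Suc n) * r ^ n)"])
    show "summable (\<lambda>n. C * (real (Suc n) * r ^ n))" using sr by (rule summable_mult)
    show "norm (norm (diffs c n * x ^ n)) \<le> C * (real (Suc n) * r ^ n)" for n
    proof -
      have "norm (diffs c n * x ^ n) = norm (diffs c n) * norm x ^ n" by (simp add: norm_mult norm_power)
      also have "\<dots> \<le> (C * real (Suc n)) * r ^ n"
        by (intro mult_mono diffs_bound[OF assms(1)] power_mono assms(2)) (use C0 in auto)
      finally show ?thesis by simp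
    qed
  qed
  have "norm (\<Sum>n. diffs c n * x ^ n) \<le> (\<Sum>n. norm (diffs c n * x ^ n))"
    by (rule summable_norm[OF sn])
  also have "\<dots> \<le> (\<Sum>n. C * (real (Suc n) * r ^ n))"
  proof (rule suminf_le[OF _ sn])
    show "summable (\<lambda>n. C * (real (Suc n) * r ^ n))" using sr by (rule summable_mult)
    show "norm (diffs c n * x ^ n) \<le> C * (real (Suc n) * r ^ n)" for n
    proof -
      have "norm (diffs c n * x ^ n) = norm (diffs c n) * norm x ^ n" by (simp add: norm_mult norm_power)
      also have "\<dots> \<le> (C * real (Suc n)) * r ^ n"
        by (intro mult_mono diffs_bound[OF assms(1)] power_mono assms(2)) (use C0 in auto)
      finally show ?thesis by simp
    qed
  qed
  also have "\<dots> = C * (\<Sum>n. real (Suc n) * r ^ n)" using sr by (rule suminf_mult)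
  finally show ?thesis .
qed

lemma ser_deriv:
  fixes h h' :: "nat \<Rightarrow> complex \<Rightarrow> complex" and M N :: "nat \<Rightarrow> real"
  assumes r: "r > 0"
    and d: "\<And>n x. x \<in> ball x0 r \<Longrightarrow> (h n has_field_derivative h' n x) (at x)"
    and bh: "\<And>n x. x \<in> ball x0 r \<Longrightarrow> norm (h n x) \<le> M n"
    and bh': "\<And>n x. x \<in> ball x0 r \<Longrightarrow> norm (h' n x) \<le> N n"
    and sM: "summable M" and sN: "summable N"
  shows "((\<lambda>x. \<Sum>n. h n x) has_field_derivative (\<Sum>n. h' n x0)) (at x0)"
proof -
  have x0: "x0 \<in> ball x0 r" using r by simp
  have sh: "summable (\<lambda>n. h n x0)"
    by (rule summable_comparison_test'[OF sM]) (use bh x0 in auto)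
  show ?thesis
  proof (rule has_field_derivative_series'(2)[of "ball x0 r" h h' x0])
    show "convex (ball x0 r)" by simp
    show "(h n has_field_derivative h' n x) (at x within ball x0 r)" if "x \<in> ball x0 r" for n x
      using d[OF that] by (rule has_field_derivative_at_within)
    show "uniformly_convergent_on (ball x0 r) (\<lambda>n x. \<Sum>i<n. h' i x)"
      by (rule Weierstrass_m_test'[OF bh' sN])
    show "x0 \<in> ball x0 r" by (rule x0)
    show "summable (\<lambda>n. h n x0)" by (rule sh)
    show "x0 \<in> interior (ball x0 r)" using x0 by simp
  qed
qed


locale qs =
  fixes \<rho> q :: real and s :: complex
  assumes rho: "\<rho> > 0" and q0: "0 < q" and q1: "q < 1" and res: "Re s \<ge> 0"
begin

lemma geo_q: "summable (\<lambda>c. q ^ c)" "(\<Sum>c. q ^ c) = 1 / (1 - q)"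
  using q0 q1 by (auto intro!: summable_geometric simp: suminf_geometric)

lemma wgeo: "summable (\<lambda>c. (1 - q) * q ^ c)" "(\<Sum>c. (1 - q) * q ^ c) = 1"
proof -
  show "summable (\<lambda>c. (1 - q) * q ^ c)" by (rule summable_mult[OF geo_q(1)])
  have "(\<Sum>c. (1 - q) * q ^ c) = (1 - q) * (\<Sum>c. q ^ c)" by (rule suminf_mult[OF geo_q(1)])
  also have "\<dots> = 1" using q1 by (simp add: geo_q(2))
  finally show "(\<Sum>c. (1 - q) * q ^ c) = 1" .
qed

lemma wsum:
  fixes g :: "nat \<Rightarrow> real"
  assumes g0: "\<And>c. 0 \<le> g c" and g1: "\<And>c. g c \<le> 1"
  shows "summable (\<lambda>c. (1 - q) * q ^ c * g c)" "0 \<le> (\<Sum>c. (1 - q) * q ^ c * g c)"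
    "(\<Sum>c. (1 - q) * q ^ c * g c) \<le> 1"
proof -
  have w0: "0 \<le> (1 - q) * q ^ c" for c using q0 q1 by simp
  have le: "(1 - q) * q ^ c * g c \<le> (1 - q) * q ^ c" for c
    using mult_left_mono[OF g1 w0] by simp
  have nn: "0 \<le> (1 - q) * q ^ c * g c" for c using w0 g0 by simp
  show sm: "summable (\<lambda>c. (1 - q) * q ^ c * g c)"
    by (rule summable_comparison_test'[OF wgeo(1)]) (use le nn in auto)
  show "0 \<le> (\<Sum>c. (1 - q) * q ^ c * g c)" by (rule suminf_nonneg[OF sm nn])
  have "(\<Sum>c. (1 - q) * q ^ c * g c) \<le> (\<Sum>c. (1 - q) * q ^ c)"
    by (rule suminf_le[OF le sm wgeo(1)])
  then show "(\<Sum>c. (1 - q) * q ^ c * g c) \<le> 1" using wgeo(2) by simp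
qed

lemma conv:
  fixes X A B :: real and m j :: nat
  assumes "0 \<le> X" "X \<le> 1" "0 \<le> A" "A \<le> 1" "0 \<le> B" "B \<le> 1" "j > 0"
  shows "0 \<le> \<rho> / (1 + \<rho>) * X + 1 / (1 + \<rho>) * (real m / real (m + j) * A + real j / real (m + j) * B)"
    "\<rho> / (1 + \<rho>) * X + 1 / (1 + \<rho>) * (real m / real (m + j) * A + real j / real (m + j) * B) \<le> 1"
proof -
  define al where "al = real m / real (m + j)"
  define be where "be = real j / real (m + j)"
  have mj: "real (m + j) > 0" using assms(7) by simp
  have ab: "al + be = 1" unfolding al_def be_def add_divide_distrib[symmetric] of_nat_add[symmetric] using mj by simp
  have al0: "al \<ge> 0" and be0: "be \<ge> 0" unfolding al_def be_def by simp_all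
  have Y0: "0 \<le> al * A + be * B" using al0 be0 assms by simp
  have Y1: "al * A + be * B \<le> 1"
  proof -
    have "al * A + be * B \<le> al * 1 + be * 1"
      by (intro add_mono mult_left_mono) (use assms al0 be0 in auto)
    then show ?thesis using ab by simp
  qed
  have r1: "0 < 1 + \<rho>" using rho by simp
  show "0 \<le> \<rho> / (1 + \<rho>) * X + 1 / (1 + \<rho>) * (real m / real (m + j) * A + real j / real (m + j) * B)"
    unfolding al_def[symmetric] be_def[symmetric] using Y0 assms rho r1 by simp
  have "\<rho> / (1 + \<rho>) * X + 1 / (1 + \<rho>) * (al * A + be * B) \<le> \<rho> / (1 + \<rho>) * 1 + 1 / (1 + \<rho>) * 1"
    by (intro add_mono mult_left_mono) (use assms Y1 rho r1 in auto)
  also have "\<dots> = 1" using r1 by (simp add: field_simps)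
  finally show "\<rho> / (1 + \<rho>) * X + 1 / (1 + \<rho>) * (real m / real (m + j) * A + real j / real (m + j) * B) \<le> 1"
    unfolding al_def be_def .
qed

lemma hit_bd: "0 \<le> hit \<rho> q k m j \<and> hit \<rho> q k m j \<le> 1"
proof (induction k arbitrary: m j)
  case 0
  then show ?case by simp
next
  case (Suc k)
  show ?case
  proof (cases "j = 0")
    case True
    then show ?thesis by simp
  next
    case False
    have g0: "\<And>c. 0 \<le> hit \<rho> q k (m + c + 1) j" and g1: "\<And>c. hit \<rho> q k (m + c + 1) j \<le> 1"
      using Suc.IH by auto
    note W = wsum[of "\<lambda>c. hit \<rho> q k (m + c + 1) j", OF g0 g1]
    have A: "0 \<le> hit \<rho> q k (m - 1) j" "hit \<rho> q k (m - 1) j \<le> 1" using Suc.IH by auto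
    have B: "0 \<le> hit \<rho> q k m (j - 1)" "hit \<rho> q k m (j - 1) \<le> 1" using Suc.IH by auto
    have jp: "j > 0" using False by simp
    note CV = conv[OF W(2) W(3) A B jp, of m]
    show ?thesis using False CV by (simp add: mult.assoc)
  qed
qed

lemma hit_nonneg: "0 \<le> hit \<rho> q k m j" using hit_bd by blast
lemma hit_le1: "hit \<rho> q k m j \<le> 1" using hit_bd by blast

lemma hit_Suc0: "hit \<rho> q (Suc k) m 0 = 0" by simp

lemma hit_psum: "(\<Sum>k<K. hit \<rho> q k m j) \<le> 1"
proof (induction K arbitrary: m j)
  case 0
  then show ?case by simp
next
  case (Suc K)
  have sh: "(\<Sum>k<Suc K. hit \<rho> q k m j) = hit \<rho> q 0 m j + (\<Sum>k<K. hit \<rho> q (Suc k) m j)"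
    by (rule sum.lessThan_Suc_shift)
  show ?case
  proof (cases "j = 0")
    case True
    then show ?thesis unfolding sh by simp
  next
    case False
    define X where "X k = (\<Sum>c. (1 - q) * q ^ c * hit \<rho> q k (m + c + 1) j)" for k
    define al where "al = real m / real (m + j)"
    define be where "be = real j / real (m + j)"
    define r1 where "r1 = \<rho> / (1 + \<rho>)"
    define r2 where "r2 = 1 / (1 + \<rho>)"
    have hS: "hit \<rho> q (Suc k) m j = r1 * X k + r2 * (al * hit \<rho> q k (m - 1) j + be * hit \<rho> q k m (j - 1))" for k
      using False unfolding X_def al_def be_def r1_def r2_def by simp
    have sumX: "(\<Sum>k<K. X k) = (\<Sum>c. (1 - q) * q ^ c * (\<Sum>k<K. hit \<rho> q k (m + c + 1) j))"
    proof -
      have "(\<Sum>k<K. X k) = (\<Sum>c. \<Sum>k<K. (1 - q) * q ^ c * hit \<rho> q k (m + c + 1) j)"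
        unfolding X_def
        by (rule suminf_sum[symmetric]) (rule wsum(1)[OF hit_nonneg hit_le1])
      also have "\<dots> = (\<Sum>c. (1 - q) * q ^ c * (\<Sum>k<K. hit \<rho> q k (m + c + 1) j))"
        by (simp add: sum_distrib_left)
      finally show ?thesis .
    qed
    have g0: "0 \<le> (\<Sum>k<K. hit \<rho> q k (m + c + 1) j)" for c by (rule sum_nonneg) (rule hit_nonneg)
    note W = wsum[of "\<lambda>c. (\<Sum>k<K. hit \<rho> q k (m + c + 1) j)", OF g0 Suc.IH]
    have A: "0 \<le> (\<Sum>k<K. hit \<rho> q k (m - 1) j)" "(\<Sum>k<K. hit \<rho> q k (m - 1) j) \<le> 1"
      using Suc.IH by (auto intro: sum_nonneg hit_nonneg)
    have B: "0 \<le> (\<Sum>k<K. hit \<rho> q k m (j - 1))" "(\<Sum>k<K. hit \<rho> q k m (j - 1)) \<le> 1"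
      using Suc.IH by (auto intro: sum_nonneg hit_nonneg)
    have jp: "j > 0" using False by simp
    note CV = conv[OF W(2) W(3) A B jp, of m]
    have "(\<Sum>k<K. hit \<rho> q (Suc k) m j) = r1 * (\<Sum>k<K. X k) + r2 * (al * (\<Sum>k<K. hit \<rho> q k (m - 1) j) + be * (\<Sum>k<K. hit \<rho> q k m (j - 1)))"
      unfolding hS by (simp add: sum.distrib sum_distrib_left distrib_left)
    also have "\<dots> \<le> 1" using CV(2) unfolding sumX al_def be_def r1_def r2_def .
    finally show ?thesis unfolding sh using False by simp
  qed
qed

lemma hit_summable: "summable (\<lambda>k. hit \<rho> q k m j)"
  by (rule summableI_nonneg_bounded[OF hit_nonneg hit_psum])

lemma hit_suminf: "(\<Sum>k. hit \<rho> q k m j) \<le> 1"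
  by (rule suminf_le_const[OF hit_summable hit_psum])

definition zz :: complex where "zz = of_real (1 + \<rho>) / (of_real (1 + \<rho>) + s)"

lemma den_Re: "Re (of_real (1 + \<rho>) + s) \<ge> 1 + \<rho>" using res by simp

lemma den_nz: "of_real (1 + \<rho>) + s \<noteq> 0"
proof
  assume "of_real (1 + \<rho>) + s = 0"
  then have "Re (of_real (1 + \<rho>) + s) = 0" by simp
  then show False using den_Re rho by simp
qed

lemma zz_norm: "norm zz \<le> 1"
proof -
  have "1 + \<rho> \<le> norm (of_real (1 + \<rho>) + s)"
    using den_Re complex_Re_le_cmod[of "of_real (1 + \<rho>) + s"] by linarith
  moreover have "norm zz = (1 + \<rho>) / norm (of_real (1 + \<rho>) + s)"
    unfolding zz_def norm_divide norm_of_real using rho by simp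
  moreover have "norm (of_real (1 + \<rho>) + s) > 0" using den_nz by simp
  ultimately show ?thesis by (simp add: divide_le_eq_1)
qed

lemma zz_den: "zz * (of_real (1 + \<rho>) + s) = of_real (1 + \<rho>)"
  unfolding zz_def using den_nz by simp

lemma estar_def': "estar \<rho> q s n b = (\<Sum>k. of_real (hit \<rho> q k n b) * zz ^ k)"
  unfolding estar_def zz_def by simp

lemma hz_norm: "norm (of_real (hit \<rho> q k n b) * zz ^ k) \<le> hit \<rho> q k n b"
proof -
  have "norm (of_real (hit \<rho> q k n b) * zz ^ k) = hit \<rho> q k n b * norm zz ^ k"
    using hit_nonneg by (simp add: norm_mult norm_power)
  also have "\<dots> \<le> hit \<rho> q k n b * 1"
    by (rule mult_left_mono[OF power_le_one[OF norm_ge_zero zz_norm] hit_nonneg])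
  finally show ?thesis by simp
qed

lemma hz_summable: "summable (\<lambda>k. norm (of_real (hit \<rho> q k n b) * zz ^ k))"
  by (rule summable_comparison_test'[OF hit_summable]) (use hz_norm in auto)

lemma estar_bd: "norm (estar \<rho> q s n b) \<le> 1"
proof -
  have "norm (estar \<rho> q s n b) \<le> (\<Sum>k. norm (of_real (hit \<rho> q k n b) * zz ^ k))"
    unfolding estar_def' by (rule summable_norm[OF hz_summable])
  also have "\<dots> \<le> (\<Sum>k. hit \<rho> q k n b)"
    by (rule suminf_le[OF hz_norm hz_summable hit_summable])
  also have "\<dots> \<le> 1" by (rule hit_suminf)
  finally show ?thesis .
qed

lemma estar0: "estar \<rho> q s n 0 = 1"
proof -
  have "(\<lambda>k. of_real (hit \<rho> q k n 0) * zz ^ k) = (\<lambda>k. if k = 0 then (1::complex) else 0)"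
  proof
    fix k show "of_real (hit \<rho> q k n 0) * zz ^ k = (if k = 0 then (1::complex) else 0)"
      by (cases k) simp_all
  qed
  moreover have "(\<lambda>k. if k = 0 then (1::complex) else 0) sums 1"
    using sums_single[of 0 "\<lambda>_. (1::complex)"] by simp
  ultimately show ?thesis unfolding estar_def' by (simp add: sums_iff)
qed

lemma estar_rec:
  assumes jnz: "j \<noteq> 0"
  shows "(of_real (1 + \<rho>) + s) * estar \<rho> q s m j =
     of_real \<rho> * (\<Sum>c. of_real ((1 - q) * q ^ c) * estar \<rho> q s (m + c + 1) j)
     + of_real (real m / real (m + j)) * estar \<rho> q s (m - 1) j
     + of_real (real j / real (m + j)) * estar \<rho> q s m (j - 1)"
proof -
  define H where "H n b k = of_real (hit \<rho> q k n b) * zz ^ k" for n b k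
  define X where "X k = (\<Sum>c. (1 - q) * q ^ c * hit \<rho> q k (m + c + 1) j)" for k
  define al where "al = real m / real (m + j)"
  define be where "be = real j / real (m + j)"
  define r1 where "r1 = \<rho> / (1 + \<rho>)"
  define r2 where "r2 = 1 / (1 + \<rho>)"
  have r1p: "r1 > 0" unfolding r1_def using rho by simp
  have r2p: "r2 > 0" unfolding r2_def using rho by simp
  have al0: "al \<ge> 0" and be0: "be \<ge> 0" unfolding al_def be_def by simp_all
  have hS: "hit \<rho> q (Suc k) m j = r1 * X k + r2 * (al * hit \<rho> q k (m - 1) j + be * hit \<rho> q k m (j - 1))" for k
    using jnz unfolding X_def al_def be_def r1_def r2_def by simp
  have Xs: "summable (\<lambda>c. (1 - q) * q ^ c * hit \<rho> q k (m + c + 1) j)" for k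
    by (rule wsum(1)[OF hit_nonneg hit_le1])
  have X0: "0 \<le> X k" for k unfolding X_def by (rule wsum(2)[OF hit_nonneg hit_le1])
  have Xle: "X k \<le> hit \<rho> q (Suc k) m j / r1" for k
  proof -
    have "0 \<le> r2 * (al * hit \<rho> q k (m - 1) j + be * hit \<rho> q k m (j - 1))"
      using r2p al0 be0 hit_nonneg by simp
    then have "r1 * X k \<le> hit \<rho> q (Suc k) m j" unfolding hS by simp
    then show ?thesis using r1p by (simp add: field_simps)
  qed
  have hSs: "summable (\<lambda>k. hit \<rho> q (Suc k) m j / r1)"
    using hit_summable[of m j] summable_Suc_iff[of "\<lambda>k. hit \<rho> q k m j"]
    by (intro summable_divide) simp
  have sX: "summable (\<lambda>k. norm (of_real (X k) * zz ^ k))"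
  proof (rule summable_comparison_test'[OF hSs])
    fix k
    have "norm (norm (of_real (X k) * zz ^ k)) = X k * norm zz ^ k"
      using X0 by (simp add: norm_mult norm_power)
    also have "\<dots> \<le> X k * 1"
      by (rule mult_left_mono[OF power_le_one[OF norm_ge_zero zz_norm] X0])
    also have "\<dots> \<le> hit \<rho> q (Suc k) m j / r1" using Xle by simp
    finally show "norm (norm (of_real (X k) * zz ^ k)) \<le> hit \<rho> q (Suc k) m j / r1" .
  qed
  define T where "T = (\<Sum>k. of_real (X k) * zz ^ k)"
  have Hsum: "H n b sums estar \<rho> q s n b" for n b
  proof -
    have "summable (H n b)" unfolding H_def by (rule summable_norm_cancel[OF hz_summable])
    then show ?thesis unfolding estar_def' H_def[symmetric] by (rule summable_sums)
  qed
  have hsuc_sum: "summable (\<lambda>k. of_real (hit \<rho> q (Suc k) m j) * zz ^ k)"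
  proof (rule summable_norm_cancel, rule summable_comparison_test'[where g="\<lambda>k. hit \<rho> q (Suc k) m j"])
    show "summable (\<lambda>k. hit \<rho> q (Suc k) m j)"
      using hit_summable[of m j] summable_Suc_iff[of "\<lambda>k. hit \<rho> q k m j"] by simp
    fix k
    have "norm (of_real (hit \<rho> q (Suc k) m j) * zz ^ k) = hit \<rho> q (Suc k) m j * norm zz ^ k"
      by (simp only: norm_mult norm_power norm_of_real abs_of_nonneg[OF hit_nonneg])
    also have "\<dots> \<le> hit \<rho> q (Suc k) m j * 1"
      by (rule mult_left_mono[OF power_le_one[OF norm_ge_zero zz_norm] hit_nonneg])
    finally show "norm (norm (of_real (hit \<rho> q (Suc k) m j) * zz ^ k)) \<le> hit \<rho> q (Suc k) m j" by simp
  qed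
  have step1: "estar \<rho> q s m j = zz * (\<Sum>k. of_real (hit \<rho> q (Suc k) m j) * zz ^ k)"
  proof -
    have sH: "summable (H m j)" using Hsum sums_summable by blast
    have "(\<Sum>k. H m j (Suc k)) = suminf (H m j) - H m j 0" by (rule suminf_split_head[OF sH])
    moreover have "H m j 0 = 0" unfolding H_def using jnz by simp
    moreover have "suminf (H m j) = estar \<rho> q s m j" using Hsum by (simp add: sums_iff)
    moreover have "(\<Sum>k. H m j (Suc k)) = (\<Sum>k. zz * (of_real (hit \<rho> q (Suc k) m j) * zz ^ k))"
      unfolding H_def by (simp add: algebra_simps del: hit.simps)
    moreover have "(\<Sum>k. zz * (of_real (hit \<rho> q (Suc k) m j) * zz ^ k)) = zz * (\<Sum>k. of_real (hit \<rho> q (Suc k) m j) * zz ^ k)"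
      by (rule suminf_mult[OF hsuc_sum])
    ultimately show ?thesis by simp
  qed
  have step2: "(\<lambda>k. of_real (hit \<rho> q (Suc k) m j) * zz ^ k) sums
      (of_real r1 * T + of_real r2 * (of_real al * estar \<rho> q s (m - 1) j + of_real be * estar \<rho> q s m (j - 1)))"
  proof -
    have sT: "(\<lambda>k. of_real (X k) * zz ^ k) sums T"
      unfolding T_def by (rule summable_sums[OF summable_norm_cancel[OF sX]])
    have "(\<lambda>k. of_real r1 * (of_real (X k) * zz ^ k) + of_real r2 * (of_real al * H (m - 1) j k + of_real be * H m (j - 1) k)) sums
      (of_real r1 * T + of_real r2 * (of_real al * estar \<rho> q s (m - 1) j + of_real be * estar \<rho> q s m (j - 1)))"
      by (intro sums_add sums_mult sT Hsum)
    moreover have "(\<lambda>k. of_real r1 * (of_real (X k) * zz ^ k) + of_real r2 * (of_real al * H (m - 1) j k + of_real be * H m (j - 1) k))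
       = (\<lambda>k. of_real (hit \<rho> q (Suc k) m j) * zz ^ k)"
    proof
      fix k
      show "of_real r1 * (of_real (X k) * zz ^ k) + of_real r2 * (of_real al * H (m - 1) j k + of_real be * H m (j - 1) k)
         = of_real (hit \<rho> q (Suc k) m j) * zz ^ k"
        unfolding hS H_def by (simp add: algebra_simps)
    qed
    ultimately show ?thesis by simp
  qed
  have step3: "T = (\<Sum>c. of_real ((1 - q) * q ^ c) * estar \<rho> q s (m + c + 1) j)"
  proof -
    define cc where "cc k c = of_real ((1 - q) * q ^ c * hit \<rho> q k (m + c + 1) j) * zz ^ k" for k c
    have ncc: "norm (cc k c) \<le> (1 - q) * q ^ c * hit \<rho> q k (m + c + 1) j" for k c
    proof -
      have nn: "0 \<le> (1 - q) * q ^ c * hit \<rho> q k (m + c + 1) j" using q0 q1 hit_nonneg by simp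
      have "norm (cc k c) = (1 - q) * q ^ c * hit \<rho> q k (m + c + 1) j * norm zz ^ k"
        unfolding cc_def by (simp only: norm_mult norm_power norm_of_real abs_of_nonneg[OF nn])
      also have "\<dots> \<le> (1 - q) * q ^ c * hit \<rho> q k (m + c + 1) j * 1"
        by (rule mult_left_mono[OF power_le_one[OF norm_ge_zero zz_norm] nn])
      finally show ?thesis by simp
    qed
    have e1: "of_real (X k) * zz ^ k = (\<Sum>c. cc k c)" for k
    proof -
      have "of_real (X k) = (\<Sum>c. of_real ((1 - q) * q ^ c * hit \<rho> q k (m + c + 1) j) :: complex)"
        unfolding X_def by (rule suminf_of_real[OF Xs])
      moreover have "(\<Sum>c. of_real ((1 - q) * q ^ c * hit \<rho> q k (m + c + 1) j) :: complex) * zz ^ k = (\<Sum>c. cc k c)"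
        unfolding cc_def
        by (rule suminf_mult2[OF summable_of_real[OF Xs]])
      ultimately show ?thesis by simp
    qed
    have rowN: "summable (\<lambda>c. norm (cc k c))" for k
    proof (rule summable_comparison_test'[OF wgeo(1)])
      fix c
      have "(1 - q) * q ^ c * hit \<rho> q k (m + c + 1) j \<le> (1 - q) * q ^ c * 1"
        by (rule mult_left_mono[OF hit_le1]) (use q0 q1 in simp)
      then show "norm (norm (cc k c)) \<le> (1 - q) * q ^ c" using ncc[of k c] by simp
    qed
    have colN: "summable (\<lambda>k. norm (cc k c))" for c
    proof (rule summable_comparison_test'[where g="\<lambda>k. (1 - q) * q ^ c * hit \<rho> q k (m + c + 1) j"])
      show "summable (\<lambda>k. (1 - q) * q ^ c * hit \<rho> q k (m + c + 1) j)" by (rule summable_mult[OF hit_summable])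
      show "norm (norm (cc k c)) \<le> (1 - q) * q ^ c * hit \<rho> q k (m + c + 1) j" for k using ncc[of k c] by simp
    qed
    have outer: "summable (\<lambda>k. \<Sum>c. norm (cc k c))"
    proof (rule summable_comparison_test'[OF hSs])
      fix k
      have "(\<Sum>c. norm (cc k c)) \<le> X k"
        unfolding X_def by (rule suminf_le[OF ncc rowN Xs])
      moreover have "0 \<le> (\<Sum>c. norm (cc k c))" by (rule suminf_nonneg[OF rowN]) simp
      ultimately show "norm (\<Sum>c. norm (cc k c)) \<le> hit \<rho> q (Suc k) m j / r1" using Xle[of k] by simp
    qed
    have "T = (\<Sum>k. \<Sum>c. cc k c)" unfolding T_def e1 ..
    also have "\<dots> = (\<Sum>c. \<Sum>k. cc k c)" by (rule dbl_swap2[OF rowN colN outer])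
    also have "\<dots> = (\<Sum>c. of_real ((1 - q) * q ^ c) * estar \<rho> q s (m + c + 1) j)"
    proof (rule suminf_cong)
      fix c
      have "(\<lambda>k. cc k c) = (\<lambda>k. of_real ((1 - q) * q ^ c) * H (m + c + 1) j k)"
        unfolding cc_def H_def by (simp add: mult.assoc)
      moreover have "(\<lambda>k. of_real ((1 - q) * q ^ c) * H (m + c + 1) j k) sums (of_real ((1 - q) * q ^ c) * estar \<rho> q s (m + c + 1) j)"
        by (rule sums_mult[OF Hsum])
      ultimately show "(\<Sum>k. cc k c) = of_real ((1 - q) * q ^ c) * estar \<rho> q s (m + c + 1) j"
        by (simp add: sums_iff)
    qed
    finally show ?thesis .
  qed
  have fin: "estar \<rho> q s m j = zz * (of_real r1 * T + of_real r2 * (of_real al * estar \<rho> q s (m - 1) j + of_real be * estar \<rho> q s m (j - 1)))"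
    using step1 step2 by (simp add: sums_iff)
  have k1: "of_real (1 + \<rho>) * (of_real r1 :: complex) = of_real \<rho>"
    unfolding r1_def of_real_mult[symmetric] using rho by simp
  have k2: "of_real (1 + \<rho>) * (of_real r2 :: complex) = 1"
    unfolding r2_def of_real_mult[symmetric] using rho by simp
  have "(of_real (1 + \<rho>) + s) * estar \<rho> q s m j
      = (zz * (of_real (1 + \<rho>) + s)) * (of_real r1 * T + of_real r2 * (of_real al * estar \<rho> q s (m - 1) j + of_real be * estar \<rho> q s m (j - 1)))"
    unfolding fin by (simp add: algebra_simps)
  also have "\<dots> = (of_real (1 + \<rho>) * of_real r1) * T + (of_real (1 + \<rho>) * of_real r2) * (of_real al * estar \<rho> q s (m - 1) j + of_real be * estar \<rho> q s m (j - 1))"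
    unfolding zz_den by (simp add: algebra_simps)
  also have "\<dots> = of_real \<rho> * T + (of_real al * estar \<rho> q s (m - 1) j + of_real be * estar \<rho> q s m (j - 1))"
    unfolding k1 k2 by simp
  finally show ?thesis unfolding step3 al_def be_def by simp
qed

definition ff :: "nat \<Rightarrow> nat \<Rightarrow> complex" where
  "ff n b = (\<Sum>c. of_real (q ^ c) * estar \<rho> q s (n + c + 1) b)"

lemma ff_norm_term: "norm (of_real (q ^ c) * estar \<rho> q s n b) \<le> q ^ c"
proof -
  have "norm (of_real (q ^ c) * estar \<rho> q s n b) = q ^ c * norm (estar \<rho> q s n b)"
    by (simp only: norm_mult norm_of_real abs_of_nonneg[OF zero_le_power[OF less_imp_le[OF q0]]])
  also have "\<dots> \<le> q ^ c * 1" by (rule mult_left_mono[OF estar_bd]) (use q0 in simp)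
  finally show ?thesis by simp
qed

lemma ff_summ: "summable (\<lambda>c. norm (of_real (q ^ c) * estar \<rho> q s (n + c + 1) b))"
  by (rule summable_comparison_test'[OF geo_q(1)]) (use ff_norm_term in simp)

lemma ff_summ': "summable (\<lambda>c. of_real (q ^ c) * estar \<rho> q s (n + c + 1) b)"
  by (rule summable_norm_cancel[OF ff_summ])

lemma ff_bd: "norm (ff n b) \<le> 1 / (1 - q)"
proof -
  have "norm (ff n b) \<le> (\<Sum>c. norm (of_real (q ^ c) * estar \<rho> q s (n + c + 1) b))"
    unfolding ff_def by (rule summable_norm[OF ff_summ])
  also have "\<dots> \<le> (\<Sum>c. q ^ c)" by (rule suminf_le[OF ff_norm_term ff_summ geo_q(1)])
  finally show ?thesis using geo_q(2) by simp
qed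

lemma ff_rel: "ff n b = estar \<rho> q s (n + 1) b + of_real q * ff (n + 1) b"
proof -
  define f where "f c = of_real (q ^ c) * estar \<rho> q s (n + c + 1) b" for c
  have sf: "summable f" unfolding f_def by (rule ff_summ')
  have "(\<Sum>c. f (Suc c)) = suminf f - f 0" by (rule suminf_split_head[OF sf])
  moreover have "f 0 = estar \<rho> q s (n + 1) b" unfolding f_def by simp
  moreover have "(\<Sum>c. f (Suc c)) = (\<Sum>c. of_real q * (of_real (q ^ c) * estar \<rho> q s (n + 1 + c + 1) b))"
    unfolding f_def by (simp add: algebra_simps)
  moreover have "(\<Sum>c. of_real q * (of_real (q ^ c) * estar \<rho> q s (n + 1 + c + 1) b)) = of_real q * ff (n + 1) b"
    unfolding ff_def by (rule suminf_mult[OF ff_summ'])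
  ultimately show ?thesis unfolding ff_def f_def[symmetric] by (simp add: algebra_simps)
qed

lemma recR:
  assumes jnz: "j \<noteq> 0"
  shows "(of_real (1 + \<rho>) + s) * of_nat (m + j) * estar \<rho> q s m j =
     of_real \<rho> * of_real (1 - q) * of_nat (m + j) * ff m j + of_nat m * estar \<rho> q s (m - 1) j
     + of_nat j * estar \<rho> q s m (j - 1)"
proof -
  have S: "(\<Sum>c. of_real ((1 - q) * q ^ c) * estar \<rho> q s (m + c + 1) j) = of_real (1 - q) * ff m j"
  proof -
    have "(\<Sum>c. of_real ((1 - q) * q ^ c) * estar \<rho> q s (m + c + 1) j)
        = (\<Sum>c. of_real (1 - q) * (of_real (q ^ c) * estar \<rho> q s (m + c + 1) j))"
      by (simp add: mult.assoc)
    also have "\<dots> = of_real (1 - q) * ff m j" unfolding ff_def by (rule suminf_mult[OF ff_summ'])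
    finally show ?thesis .
  qed
  have mj: "real (m + j) \<noteq> 0" using jnz by simp
  have c1: "of_nat (m + j) * (of_real (real m / real (m + j)) :: complex) = of_nat m"
  proof -
    have "of_nat (m + j) * (of_real (real m / real (m + j)) :: complex) = of_real (real (m + j) * (real m / real (m + j)))"
      by (simp only: of_real_mult of_real_of_nat_eq)
    also have "\<dots> = of_nat m"
    proof -
      have e: "real (m + j) * (real m / real (m + j)) = real m"
        unfolding times_divide_eq_right by (rule nonzero_mult_div_cancel_left[OF mj])
      show ?thesis unfolding e by simp
    qed
    finally show ?thesis .
  qed
  have c2: "of_nat (m + j) * (of_real (real j / real (m + j)) :: complex) = of_nat j"
  proof -
    have "of_nat (m + j) * (of_real (real j / real (m + j)) :: complex) = of_real (real (m + j) * (real j / real (m + j)))"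
      by (simp only: of_real_mult of_real_of_nat_eq)
    also have "\<dots> = of_nat j"
    proof -
      have e: "real (m + j) * (real j / real (m + j)) = real j"
        unfolding times_divide_eq_right by (rule nonzero_mult_div_cancel_left[OF mj])
      show ?thesis unfolding e by simp
    qed
    finally show ?thesis .
  qed
  have "(of_real (1 + \<rho>) + s) * of_nat (m + j) * estar \<rho> q s m j = of_nat (m + j) * ((of_real (1 + \<rho>) + s) * estar \<rho> q s m j)"
    by (simp add: algebra_simps)
  also have "\<dots> = of_nat (m + j) * (of_real \<rho> * (of_real (1 - q) * ff m j)
     + of_real (real m / real (m + j)) * estar \<rho> q s (m - 1) j
     + of_real (real j / real (m + j)) * estar \<rho> q s m (j - 1))"
    unfolding estar_rec[OF jnz] S ..
  also have "\<dots> = of_real \<rho> * of_real (1 - q) * of_nat (m + j) * ff m j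
     + (of_nat (m + j) * of_real (real m / real (m + j))) * estar \<rho> q s (m - 1) j
     + (of_nat (m + j) * of_real (real j / real (m + j))) * estar \<rho> q s m (j - 1)"
    by (simp only: algebra_simps)
  also have "\<dots> = of_real \<rho> * of_real (1 - q) * of_nat (m + j) * ff m j + of_nat m * estar \<rho> q s (m - 1) j
     + of_nat j * estar \<rho> q s m (j - 1)"
    unfolding c1 c2 ..
  finally show ?thesis .
qed

end


lemma dps_summable:
  fixes c :: "nat \<Rightarrow> complex" and x :: complex
  assumes "\<And>n. norm (c n) \<le> C" "norm x < 1"
  shows "summable (\<lambda>n. diffs c n * x ^ n)"
proof -
  have C0: "0 \<le> C" using assms(1)[of 0] norm_ge_zero order_trans by blast
  have sr: "summable (\<lambda>n. real (Suc n) * norm x ^ n)" using nr_summable assms(2) by simp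
  have "summable (\<lambda>n. norm (diffs c n * x ^ n))"
  proof (rule summable_comparison_test'[where g="\<lambda>n. C * (real (Suc n) * norm x ^ n)"])
    show "summable (\<lambda>n. C * (real (Suc n) * norm x ^ n))" using sr by (rule summable_mult)
    show "norm (norm (diffs c n * x ^ n)) \<le> C * (real (Suc n) * norm x ^ n)" for n
    proof -
      have "norm (diffs c n * x ^ n) = norm (diffs c n) * norm x ^ n" by (simp add: norm_mult norm_power)
      also have "\<dots> \<le> (C * real (Suc n)) * norm x ^ n"
        by (rule mult_right_mono[OF diffs_bound[OF assms(1)]]) simp
      finally show ?thesis by simp
    qed
  qed
  then show ?thesis by (rule summable_norm_cancel)
qed

lemma nsum:
  fixes c :: "nat \<Rightarrow> complex" and x :: complex
  assumes "\<And>n. norm (c n) \<le> C" "norm x < 1"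
  shows "(\<lambda>n. of_nat n * c n * x ^ n) sums (x * (\<Sum>n. diffs c n * x ^ n))"
proof -
  have "(\<lambda>n. x * (diffs c n * x ^ n)) sums (x * (\<Sum>n. diffs c n * x ^ n))"
    by (rule sums_mult[OF summable_sums[OF dps_summable[OF assms]]])
  moreover have "(\<lambda>n. x * (diffs c n * x ^ n)) = (\<lambda>n. of_nat (Suc n) * c (Suc n) * x ^ (Suc n))"
    by (rule ext) (simp add: diffs_def algebra_simps)
  ultimately have "(\<lambda>n. of_nat (Suc n) * c (Suc n) * x ^ (Suc n)) sums (x * (\<Sum>n. diffs c n * x ^ n))" by simp
  then show ?thesis using sums_Suc_iff[of "\<lambda>n. of_nat n * c n * x ^ n"] by simp
qed

lemma nsum_shift:
  fixes c :: "nat \<Rightarrow> complex" and x :: complex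
  assumes "\<And>n. norm (c n) \<le> C" "norm x < 1"
  shows "(\<lambda>n. of_nat n * c (n - 1) * x ^ n) sums (x * (x * (\<Sum>n. diffs c n * x ^ n) + (\<Sum>n. c n * x ^ n)))"
proof -
  have "(\<lambda>n. x * (of_nat n * c n * x ^ n + c n * x ^ n)) sums (x * (x * (\<Sum>n. diffs c n * x ^ n) + (\<Sum>n. c n * x ^ n)))"
    by (intro sums_mult sums_add nsum[OF assms] summable_sums[OF ps_summable(2)[OF assms]])
  moreover have "(\<lambda>n. x * (of_nat n * c n * x ^ n + c n * x ^ n)) = (\<lambda>n. of_nat (Suc n) * c (Suc n - 1) * x ^ (Suc n))"
    by (rule ext) (simp add: algebra_simps)
  ultimately have "(\<lambda>n. of_nat (Suc n) * c (Suc n - 1) * x ^ (Suc n)) sums (x * (x * (\<Sum>n. diffs c n * x ^ n) + (\<Sum>n. c n * x ^ n)))" by simp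
  then show ?thesis using sums_Suc_iff[of "\<lambda>n. of_nat n * c (n - 1) * x ^ n"] by simp
qed

context qs begin

definition psi :: "nat \<Rightarrow> complex \<Rightarrow> complex" where "psi b x = (\<Sum>n. estar \<rho> q s n b * x ^ n)"
definition phi :: "nat \<Rightarrow> complex \<Rightarrow> complex" where "phi b x = (\<Sum>n. ff n b * x ^ n)"
definition dpsi :: "nat \<Rightarrow> complex \<Rightarrow> complex" where "dpsi b x = (\<Sum>n. diffs (\<lambda>n. estar \<rho> q s n b) n * x ^ n)"
definition dphi :: "nat \<Rightarrow> complex \<Rightarrow> complex" where "dphi b x = (\<Sum>n. diffs (\<lambda>n. ff n b) n * x ^ n)"
definition gg :: "nat \<Rightarrow> complex" where "gg b = psi b (of_real q)"
definition Cf :: real where "Cf = 1 / (1 - q)"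

lemma nq: "norm (of_real q :: complex) < 1" using q0 q1 by simp

lemma psi_deriv: "norm x < 1 \<Longrightarrow> ((\<lambda>x. psi b x) has_field_derivative dpsi b x) (at x)"
  unfolding psi_def dpsi_def by (rule ps_deriv[OF estar_bd])
lemma phi_deriv: "norm x < 1 \<Longrightarrow> ((\<lambda>x. phi b x) has_field_derivative dphi b x) (at x)"
  unfolding phi_def dphi_def by (rule ps_deriv[OF ff_bd])

lemma psi_bd: "norm x \<le> r \<Longrightarrow> r < 1 \<Longrightarrow> norm (psi b x) \<le> 1 * (\<Sum>n. r ^ n)"
  unfolding psi_def by (rule ps_bound[OF estar_bd])
lemma phi_bd: "norm x \<le> r \<Longrightarrow> r < 1 \<Longrightarrow> norm (phi b x) \<le> Cf * (\<Sum>n. r ^ n)"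
  unfolding phi_def Cf_def by (rule ps_bound[OF ff_bd])
lemma dpsi_bd: "norm x \<le> r \<Longrightarrow> r < 1 \<Longrightarrow> norm (dpsi b x) \<le> 1 * (\<Sum>n. real (Suc n) * r ^ n)"
  unfolding dpsi_def by (rule dps_bound[OF estar_bd])
lemma dphi_bd: "norm x \<le> r \<Longrightarrow> r < 1 \<Longrightarrow> norm (dphi b x) \<le> Cf * (\<Sum>n. real (Suc n) * r ^ n)"
  unfolding dphi_def Cf_def by (rule dps_bound[OF ff_bd])

lemma psi_rel0:
  assumes x: "norm x < 1"
  shows "psi b x = estar \<rho> q s 0 b + of_real q * ff 0 b + (x - of_real q) * phi b x"
proof -
  have sphi: "(\<lambda>n. ff n b * x ^ n) sums phi b x"
    unfolding phi_def by (rule summable_sums[OF ps_summable(2)[OF ff_bd x]])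
  have sphi': "(\<lambda>n. ff (Suc n) b * x ^ (Suc n)) sums (phi b x - ff 0 b)"
    using sphi sums_Suc_iff[of "\<lambda>n. ff n b * x ^ n"] by simp
  have "(\<lambda>n. x * (ff n b * x ^ n) - of_real q * (ff (Suc n) b * x ^ (Suc n))) sums (x * phi b x - of_real q * (phi b x - ff 0 b))"
    by (intro sums_diff sums_mult sphi sphi')
  moreover have "(\<lambda>n. x * (ff n b * x ^ n) - of_real q * (ff (Suc n) b * x ^ (Suc n))) = (\<lambda>n. estar \<rho> q s (Suc n) b * x ^ (Suc n))"
  proof
    fix n
    have "ff n b = estar \<rho> q s (Suc n) b + of_real q * ff (Suc n) b" using ff_rel[of n b] by simp
    then show "x * (ff n b * x ^ n) - of_real q * (ff (Suc n) b * x ^ (Suc n)) = estar \<rho> q s (Suc n) b * x ^ (Suc n)"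
      by (simp add: algebra_simps)
  qed
  ultimately have "(\<lambda>n. estar \<rho> q s (Suc n) b * x ^ (Suc n)) sums (x * phi b x - of_real q * (phi b x - ff 0 b))" by simp
  then have "(\<lambda>n. estar \<rho> q s n b * x ^ n) sums (x * phi b x - of_real q * (phi b x - ff 0 b) + estar \<rho> q s 0 b)"
    using sums_Suc_iff[of "\<lambda>n. estar \<rho> q s n b * x ^ n"] by simp
  then have "psi b x = x * phi b x - of_real q * (phi b x - ff 0 b) + estar \<rho> q s 0 b"
    unfolding psi_def by (simp add: sums_iff)
  then show ?thesis by (simp add: algebra_simps)
qed

lemma gg_eq: "gg b = estar \<rho> q s 0 b + of_real q * ff 0 b"
  unfolding gg_def using psi_rel0[OF nq, of b] by simp

lemma psi_rel: "norm x < 1 \<Longrightarrow> psi b x = gg b + (x - of_real q) * phi b x"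
  using psi_rel0 gg_eq by simp

lemma dpsi_rel:
  assumes x: "norm x < 1"
  shows "dpsi b x = phi b x + (x - of_real q) * dphi b x"
proof -
  have "((\<lambda>y. y - of_real q) has_field_derivative 1) (at x)"
    by (rule derivative_eq_intros refl)+ simp
  then have "((\<lambda>y. (y - of_real q) * phi b y) has_field_derivative ((x - of_real q) * dphi b x + 1 * phi b x)) (at x)"
    by (rule DERIV_mult'[OF _ phi_deriv[OF x]])
  then have d1: "((\<lambda>y. gg b + (y - of_real q) * phi b y) has_field_derivative (0 + ((x - of_real q) * dphi b x + 1 * phi b x))) (at x)"
    by (rule DERIV_add[OF DERIV_const])
  have d2: "((\<lambda>y. gg b + (y - of_real q) * phi b y) has_field_derivative dpsi b x) (at x)"
  proof (rule has_field_derivative_transform_within_open[OF psi_deriv[OF x], of "ball 0 1"])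
    show "open (ball (0::complex) 1)" by simp
    show "x \<in> ball 0 1" using x by simp
    show "psi b y = gg b + (y - of_real q) * phi b y" if "y \<in> ball 0 1" for y
      using that by (intro psi_rel) simp
  qed
  show ?thesis using DERIV_unique[OF d2 d1] by simp
qed

lemma psi0: "norm x < 1 \<Longrightarrow> psi 0 x = 1 / (1 - x)"
  unfolding psi_def estar0 using suminf_geometric[of x] by simp

lemma ode:
  assumes jnz: "j \<noteq> 0" and x: "norm x < 1"
  shows "(of_real (1 + \<rho>) + s) * (x * dpsi j x + of_nat j * psi j x) =
    of_real \<rho> * of_real (1 - q) * (x * dphi j x + of_nat j * phi j x)
    + x * (x * dpsi j x + psi j x) + of_nat j * psi (j - 1) x"
proof -
  define a where "a n = estar \<rho> q s n j" for n
  define a' where "a' n = estar \<rho> q s n (j - 1)" for n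
  define f where "f n = ff n j" for n
  have ab: "norm (a n) \<le> 1" for n unfolding a_def by (rule estar_bd)
  have ab': "norm (a' n) \<le> 1" for n unfolding a'_def by (rule estar_bd)
  have fb: "norm (f n) \<le> 1 / (1 - q)" for n unfolding f_def by (rule ff_bd)
  have Spsi: "(\<lambda>n. a n * x ^ n) sums psi j x"
    unfolding psi_def a_def by (rule summable_sums[OF ps_summable(2)[OF estar_bd x]])
  have Spsi': "(\<lambda>n. a' n * x ^ n) sums psi (j - 1) x"
    unfolding psi_def a'_def by (rule summable_sums[OF ps_summable(2)[OF estar_bd x]])
  have Sphi: "(\<lambda>n. f n * x ^ n) sums phi j x"
    unfolding phi_def f_def by (rule summable_sums[OF ps_summable(2)[OF ff_bd x]])
  have Na: "(\<lambda>n. of_nat n * a n * x ^ n) sums (x * dpsi j x)"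
    unfolding dpsi_def a_def by (rule nsum[OF estar_bd x])
  have Nf: "(\<lambda>n. of_nat n * f n * x ^ n) sums (x * dphi j x)"
    unfolding dphi_def f_def by (rule nsum[OF ff_bd x])
  have Na1: "(\<lambda>n. of_nat n * a (n - 1) * x ^ n) sums (x * (x * dpsi j x + psi j x))"
    unfolding dpsi_def psi_def a_def by (rule nsum_shift[OF estar_bd x])
  have L: "(\<lambda>n. (of_real (1 + \<rho>) + s) * (of_nat n * a n * x ^ n + of_nat j * (a n * x ^ n))) sums
      ((of_real (1 + \<rho>) + s) * (x * dpsi j x + of_nat j * psi j x))"
    by (intro sums_mult sums_add Na Spsi)
  have R: "(\<lambda>n. of_real \<rho> * of_real (1 - q) * (of_nat n * f n * x ^ n + of_nat j * (f n * x ^ n))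
        + of_nat n * a (n - 1) * x ^ n + of_nat j * (a' n * x ^ n)) sums
      (of_real \<rho> * of_real (1 - q) * (x * dphi j x + of_nat j * phi j x)
    + x * (x * dpsi j x + psi j x) + of_nat j * psi (j - 1) x)"
    by (intro sums_mult sums_add Nf Sphi Na1 Spsi')
  have eq: "(\<lambda>n. (of_real (1 + \<rho>) + s) * (of_nat n * a n * x ^ n + of_nat j * (a n * x ^ n))) =
     (\<lambda>n. of_real \<rho> * of_real (1 - q) * (of_nat n * f n * x ^ n + of_nat j * (f n * x ^ n))
        + of_nat n * a (n - 1) * x ^ n + of_nat j * (a' n * x ^ n))"
  proof
    fix n
    have r: "(of_real (1 + \<rho>) + s) * of_nat (n + j) * a n =
     of_real \<rho> * of_real (1 - q) * of_nat (n + j) * f n + of_nat n * a (n - 1) + of_nat j * a' n"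
      unfolding a_def a'_def f_def by (rule recR[OF jnz])
    have "(of_real (1 + \<rho>) + s) * (of_nat n * a n * x ^ n + of_nat j * (a n * x ^ n))
        = ((of_real (1 + \<rho>) + s) * of_nat (n + j) * a n) * x ^ n"
      by (simp add: algebra_simps)
    also have "\<dots> = (of_real \<rho> * of_real (1 - q) * of_nat (n + j) * f n + of_nat n * a (n - 1) + of_nat j * a' n) * x ^ n"
      unfolding r ..
    also have "\<dots> = of_real \<rho> * of_real (1 - q) * (of_nat n * f n * x ^ n + of_nat j * (f n * x ^ n))
        + of_nat n * a (n - 1) * x ^ n + of_nat j * (a' n * x ^ n)"
      by (simp add: algebra_simps)
    finally show "(of_real (1 + \<rho>) + s) * (of_nat n * a n * x ^ n + of_nat j * (a n * x ^ n)) =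
      of_real \<rho> * of_real (1 - q) * (of_nat n * f n * x ^ n + of_nat j * (f n * x ^ n))
        + of_nat n * a (n - 1) * x ^ n + of_nat j * (a' n * x ^ n)" .
  qed
  show ?thesis using L R unfolding eq by (rule sums_unique2)
qed

end


lemma sumb:
  fixes f :: "nat \<Rightarrow> complex"
  assumes "\<And>n. norm (f n) \<le> C * (real (Suc n) * r ^ n)" "0 \<le> r" "r < 1"
  shows "summable f"
proof -
  have "summable (\<lambda>n. C * (real (Suc n) * r ^ n))" by (rule summable_mult[OF nr_summable[OF assms(2,3)]])
  then have "summable (\<lambda>n. norm (f n))" by (rule summable_comparison_test') (use assms(1) in simp)
  then show ?thesis by (rule summable_norm_cancel)
qed

lemma geo_le_nr: "0 \<le> r \<Longrightarrow> (r::real) ^ n \<le> real (Suc n) * r ^ n"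
  by (simp add: mult_le_cancel_right1)

lemma ball_half:
  fixes x0 w :: complex
  assumes "norm x0 < 1" "w \<in> ball x0 ((1 - norm x0) / 2)"
  shows "norm w \<le> (1 + norm x0) / 2"
proof -
  have "norm w \<le> norm x0 + norm (w - x0)" by (metis add.commute diff_add_cancel norm_triangle_ineq)
  moreover have "norm (w - x0) < (1 - norm x0) / 2" using assms(2) by (simp add: dist_norm norm_minus_commute)
  ultimately show ?thesis by simp
qed

context qs begin

definition KF :: "complex \<Rightarrow> complex \<Rightarrow> complex" where
  "KF x y = (\<Sum>b. phi (Suc b) x * y ^ (Suc b))"

lemma gsum0: "r < 1 \<Longrightarrow> 0 \<le> r \<Longrightarrow> 0 \<le> (\<Sum>n. (r::real) ^ n)"
  by (rule suminf_nonneg) (auto intro: summable_geometric)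

lemma EE_eq:
  assumes x: "norm x < 1" and y: "norm y < 1"
  shows "EE \<rho> q s x y = (\<Sum>b. psi (Suc b) x * y ^ (Suc b))"
proof -
  have "(\<Sum>n. \<Sum>b. estar \<rho> q s n (Suc b) * x ^ n * y ^ Suc b) = (\<Sum>b. \<Sum>n. estar \<rho> q s n (Suc b) * x ^ n * y ^ Suc b)"
  proof (rule dbl_swap[where A="\<lambda>n. norm x ^ n" and B="\<lambda>b. norm y ^ Suc b"])
    show "norm (estar \<rho> q s n (Suc b) * x ^ n * y ^ Suc b) \<le> norm x ^ n * norm y ^ Suc b" for n b
    proof -
      have "norm (estar \<rho> q s n (Suc b) * x ^ n * y ^ Suc b) = norm (estar \<rho> q s n (Suc b)) * (norm x ^ n * norm y ^ Suc b)"
        by (simp add: norm_mult norm_power)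
      also have "\<dots> \<le> 1 * (norm x ^ n * norm y ^ Suc b)" by (rule mult_right_mono[OF estar_bd]) simp
      finally show ?thesis by simp
    qed
    show "summable (\<lambda>n. norm x ^ n)" using x by (simp add: summable_geometric)
    show "summable (\<lambda>b. norm y ^ Suc b)" using y summable_Suc_iff[of "\<lambda>b. norm y ^ b"] by (simp add: summable_geometric)
  qed simp_all
  also have "\<dots> = (\<Sum>b. psi (Suc b) x * y ^ (Suc b))"
  proof (rule suminf_cong)
    fix b
    show "(\<Sum>n. estar \<rho> q s n (Suc b) * x ^ n * y ^ Suc b) = psi (Suc b) x * y ^ Suc b"
      unfolding psi_def by (rule suminf_mult2[symmetric, OF ps_summable(2)[OF estar_bd x]])
  qed
  finally show ?thesis unfolding EE_def .
qed

lemma psi_ser_summable: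
  assumes x: "norm x < 1" and y: "norm y < 1"
  shows "summable (\<lambda>b. psi (Suc b) x * y ^ (Suc b))"
proof (rule sumb[where C="\<Sum>n. norm x ^ n" and r="norm y"])
  fix b
  have "norm (psi (Suc b) x * y ^ Suc b) = norm (psi (Suc b) x) * norm y ^ Suc b" by (simp add: norm_mult norm_power)
  also have "\<dots> \<le> (\<Sum>n. norm x ^ n) * norm y ^ b"
  proof (rule mult_mono)
    show "norm (psi (Suc b) x) \<le> (\<Sum>n. norm x ^ n)" using psi_bd[of x "norm x"] x by simp
    show "norm y ^ Suc b \<le> norm y ^ b" using y by (simp add: mult_left_le_one_le)
  qed (use gsum0 x in auto)
  also have "\<dots> \<le> (\<Sum>n. norm x ^ n) * (real (Suc b) * norm y ^ b)"
    by (rule mult_left_mono[OF geo_le_nr]) (use gsum0 x in auto)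
  finally show "norm (psi (Suc b) x * y ^ Suc b) \<le> (\<Sum>n. norm x ^ n) * (real (Suc b) * norm y ^ b)" .
qed (use y in auto)

lemma phi_ser_summable:
  assumes x: "norm x < 1" and y: "norm y < 1"
  shows "summable (\<lambda>b. phi (Suc b) x * y ^ (Suc b))"
proof (rule sumb[where C="Cf * (\<Sum>n. norm x ^ n)" and r="norm y"])
  have Cf0: "Cf \<ge> 0" unfolding Cf_def using q1 by simp
  fix b
  have "norm (phi (Suc b) x * y ^ Suc b) = norm (phi (Suc b) x) * norm y ^ Suc b" by (simp add: norm_mult norm_power)
  also have "\<dots> \<le> (Cf * (\<Sum>n. norm x ^ n)) * norm y ^ b"
  proof (rule mult_mono)
    show "norm (phi (Suc b) x) \<le> Cf * (\<Sum>n. norm x ^ n)" using phi_bd[of x "norm x"] x by simp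
    show "norm y ^ Suc b \<le> norm y ^ b" using y by (simp add: mult_left_le_one_le)
  qed (use gsum0 x Cf0 in auto)
  also have "\<dots> \<le> (Cf * (\<Sum>n. norm x ^ n)) * (real (Suc b) * norm y ^ b)"
    by (rule mult_left_mono[OF geo_le_nr]) (use gsum0 x Cf0 in auto)
  finally show "norm (phi (Suc b) x * y ^ Suc b) \<le> (Cf * (\<Sum>n. norm x ^ n)) * (real (Suc b) * norm y ^ b)" .
qed (use y in auto)

lemma EE_q: "norm y < 1 \<Longrightarrow> EE \<rho> q s (of_real q) y = (\<Sum>b. gg (Suc b) * y ^ (Suc b))"
  using EE_eq[OF nq] unfolding gg_def by simp

lemma FF_eq:
  assumes x: "norm x < 1" and y: "norm y < 1"
  shows "FF \<rho> q s x y = KF x y"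
proof (cases "x = of_real q")
  case False
  have "EE \<rho> q s x y - EE \<rho> q s (of_real q) y = (\<Sum>b. psi (Suc b) x * y ^ (Suc b) - psi (Suc b) (of_real q) * y ^ (Suc b))"
    unfolding EE_eq[OF x y] EE_eq[OF nq y]
    by (rule suminf_diff[OF psi_ser_summable[OF x y] psi_ser_summable[OF nq y]])
  also have "\<dots> = (\<Sum>b. (x - of_real q) * (phi (Suc b) x * y ^ (Suc b)))"
  proof (rule suminf_cong)
    fix b
    show "psi (Suc b) x * y ^ (Suc b) - psi (Suc b) (of_real q) * y ^ (Suc b) = (x - of_real q) * (phi (Suc b) x * y ^ (Suc b))"
    proof -
      have e1: "psi (Suc b) (of_real q) = gg (Suc b)" unfolding gg_def ..
      have e2: "psi (Suc b) x = gg (Suc b) + (x - of_real q) * phi (Suc b) x" by (rule psi_rel[OF x])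
      show ?thesis unfolding e1 e2 by (simp add: algebra_simps)
    qed
  qed
  also have "\<dots> = (x - of_real q) * KF x y"
    unfolding KF_def by (rule suminf_mult[OF phi_ser_summable[OF x y]])
  finally show ?thesis unfolding FF_def using False by simp
next
  case True
  define r where "r = (1 - q) / 2"
  define R where "R = (1 + q) / 2"
  have r0: "r > 0" unfolding r_def using q1 by simp
  have R1: "R < 1" "0 \<le> R" unfolding R_def using q0 q1 by auto
  have inb: "norm w \<le> R" if "w \<in> ball (of_real q :: complex) r" for w :: complex
    using ball_half[OF nq, of w] that q0 unfolding r_def R_def by simp
  have inb1: "norm w < 1" if "w \<in> ball (of_real q :: complex) r" for w :: complex using inb[OF that] R1 by simp
  have D: "((\<lambda>w. \<Sum>b. psi (Suc b) w * y ^ (Suc b)) has_field_derivative (\<Sum>b. dpsi (Suc b) (of_real q) * y ^ (Suc b))) (at (of_real q))"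
  proof (rule ser_deriv[OF r0, where M="\<lambda>b. (\<Sum>n. R ^ n) * norm y ^ Suc b" and N="\<lambda>b. (\<Sum>n. real (Suc n) * R ^ n) * norm y ^ Suc b"])
    show "((\<lambda>w. psi (Suc b) w * y ^ Suc b) has_field_derivative dpsi (Suc b) w * y ^ Suc b) (at w)"
      if "w \<in> ball (of_real q) r" for b w
      by (rule DERIV_cmult_right[OF psi_deriv[OF inb1[OF that]]])
    show "norm (psi (Suc b) w * y ^ Suc b) \<le> (\<Sum>n. R ^ n) * norm y ^ Suc b" if "w \<in> ball (of_real q) r" for b w
      unfolding norm_mult norm_power
      by (rule mult_right_mono) (use psi_bd[OF inb[OF that] R1(1)] in auto)
    show "norm (dpsi (Suc b) w * y ^ Suc b) \<le> (\<Sum>n. real (Suc n) * R ^ n) * norm y ^ Suc b" if "w \<in> ball (of_real q) r" for b w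
      unfolding norm_mult norm_power
      by (rule mult_right_mono) (use dpsi_bd[OF inb[OF that] R1(1)] in auto)
    show "summable (\<lambda>b. (\<Sum>n. R ^ n) * norm y ^ Suc b)"
      using y summable_Suc_iff[of "\<lambda>b. norm y ^ b"] by (intro summable_mult) (simp add: summable_geometric)
    show "summable (\<lambda>b. (\<Sum>n. real (Suc n) * R ^ n) * norm y ^ Suc b)"
      using y summable_Suc_iff[of "\<lambda>b. norm y ^ b"] by (intro summable_mult) (simp add: summable_geometric)
  qed
  have D': "((\<lambda>w. EE \<rho> q s w y) has_field_derivative (\<Sum>b. dpsi (Suc b) (of_real q) * y ^ (Suc b))) (at (of_real q))"
  proof (rule has_field_derivative_transform_within_open[OF D, of "ball 0 1"])
    show "open (ball (0::complex) 1)" by simp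
    show "of_real q \<in> ball (0::complex) 1" using nq by simp
    show "(\<Sum>b. psi (Suc b) w * y ^ (Suc b)) = EE \<rho> q s w y" if "w \<in> ball 0 1" for w
      using EE_eq[of w y] that y by simp
  qed
  have "(\<Sum>b. dpsi (Suc b) (of_real q) * y ^ (Suc b)) = KF (of_real q) y"
    unfolding KF_def using dpsi_rel[OF nq] by simp
  then show ?thesis unfolding FF_def using True DERIV_imp_deriv[OF D'] by simp
qed

end


lemma pw_pred: "0 < n \<Longrightarrow> (x::complex) * x ^ (n - Suc 0) = x ^ n" by (cases n) simp_all

lemma pow_lin_deriv1: "((\<lambda>x. (x * c) ^ Suc b) has_field_derivative (of_nat (Suc b) * (x * c) ^ b * c)) (at (x::complex))"
  by (cases b) (auto intro!: derivative_eq_intros simp: algebra_simps pw_pred)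

lemma pow_lin_deriv2: "((\<lambda>x. (c * x) ^ Suc b) has_field_derivative (of_nat (Suc b) * (c * x) ^ b * c)) (at (x::complex))"
  by (cases b) (auto intro!: derivative_eq_intros simp: algebra_simps pw_pred)

lemma bnd_mult:
  fixes a b :: complex
  assumes "norm a \<le> A" "norm b \<le> B"
  shows "norm (a * b) \<le> A * B"
proof -
  have "norm (a * b) \<le> norm a * norm b" by (rule norm_mult_ineq)
  also have "\<dots> \<le> A * B" by (rule mult_mono[OF assms]) (use order_trans[OF norm_ge_zero assms(1)] in auto)
  finally show ?thesis .
qed

context qs begin

lemma PP_deriv: "((\<lambda>x. PP \<rho> q s x) has_field_derivative (2 * x - (s + 1 + of_real \<rho> + of_real q))) (at x)"
  unfolding PP_def by (auto intro!: derivative_eq_intros simp: algebra_simps)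

lemma KFd_u:
  assumes u: "norm u < 1" and v: "norm v < 1"
  shows "((\<lambda>x. KF x (x * v)) has_field_derivative
    (\<Sum>b. phi (Suc b) u * (of_nat (Suc b) * (u * v) ^ b * v) + dphi (Suc b) u * (u * v) ^ Suc b)) (at u)"
proof -
  define r where "r = (1 - norm u) / 2"
  define R where "R = (1 + norm u) / 2"
  have r0: "r > 0" unfolding r_def using u by simp
  have R1: "R < 1" "0 \<le> R" unfolding R_def using u by auto
  have inb: "norm x \<le> R" if "x \<in> ball u r" for x using ball_half[OF u, of x] that unfolding r_def R_def by simp
  have inb1: "norm x < 1" if "x \<in> ball u r" for x using inb[OF that] R1 by simp
  have inbv: "norm (x * v) \<le> R" if "x \<in> ball u r" for x
  proof -
    have "norm (x * v) = norm x * norm v" by (rule norm_mult)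
    also have "\<dots> \<le> norm x * 1" by (rule mult_left_mono) (use v in auto)
    finally show ?thesis using inb[OF that] by simp
  qed
  define A where "A = Cf * (\<Sum>n. R ^ n)"
  define Ad where "Ad = Cf * (\<Sum>n. real (Suc n) * R ^ n)"
  have phb: "norm (phi (Suc b) x) \<le> A" if "x \<in> ball u r" for x b
    unfolding A_def by (rule phi_bd[OF inb[OF that] R1(1)])
  have dphb: "norm (dphi (Suc b) x) \<le> Ad" if "x \<in> ball u r" for x b
    unfolding Ad_def by (rule dphi_bd[OF inb[OF that] R1(1)])
  have powb: "norm ((x * v) ^ k) \<le> R ^ k" if "x \<in> ball u r" for x k
    unfolding norm_power by (rule power_mono[OF inbv[OF that] norm_ge_zero])
  have sR: "summable (\<lambda>b. R ^ Suc b)"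
    using R1 summable_Suc_iff[of "\<lambda>b. R ^ b"] by (simp add: summable_geometric)
  have D: "((\<lambda>x. \<Sum>b. phi (Suc b) x * (x * v) ^ Suc b) has_field_derivative
    (\<Sum>b. phi (Suc b) u * (of_nat (Suc b) * (u * v) ^ b * v) + dphi (Suc b) u * (u * v) ^ Suc b)) (at u)"
  proof (rule ser_deriv[OF r0, where M="\<lambda>b. A * R ^ Suc b" and N="\<lambda>b. A * (real (Suc b) * R ^ b * 1) + Ad * R ^ Suc b"])
    show "((\<lambda>x. phi (Suc b) x * (x * v) ^ Suc b) has_field_derivative
        phi (Suc b) x * (of_nat (Suc b) * (x * v) ^ b * v) + dphi (Suc b) x * (x * v) ^ Suc b) (at x)"
      if "x \<in> ball u r" for b x
      by (rule DERIV_mult'[OF phi_deriv[OF inb1[OF that]] pow_lin_deriv1])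
    show "norm (phi (Suc b) x * (x * v) ^ Suc b) \<le> A * R ^ Suc b" if "x \<in> ball u r" for b x
      by (rule bnd_mult[OF phb[OF that] powb[OF that]])
    show "norm (phi (Suc b) x * (of_nat (Suc b) * (x * v) ^ b * v) + dphi (Suc b) x * (x * v) ^ Suc b)
        \<le> A * (real (Suc b) * R ^ b * 1) + Ad * R ^ Suc b" if "x \<in> ball u r" for b x
    proof (rule order_trans[OF norm_triangle_ineq add_mono])
      have "norm (of_nat (Suc b) * (x * v) ^ b * v) \<le> real (Suc b) * R ^ b * 1"
        by (rule bnd_mult[OF bnd_mult[OF _ powb[OF that]]]) (use v in \<open>simp_all only: norm_of_nat order_refl less_imp_le\<close>)
      then show "norm (phi (Suc b) x * (of_nat (Suc b) * (x * v) ^ b * v)) \<le> A * (real (Suc b) * R ^ b * 1)"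
        by (rule bnd_mult[OF phb[OF that]])
      show "norm (dphi (Suc b) x * (x * v) ^ Suc b) \<le> Ad * R ^ Suc b"
        by (rule bnd_mult[OF dphb[OF that] powb[OF that]])
    qed
    show "summable (\<lambda>b. A * R ^ Suc b)" by (rule summable_mult[OF sR])
    show "summable (\<lambda>b. A * (real (Suc b) * R ^ b * 1) + Ad * R ^ Suc b)"
      by (intro summable_add summable_mult sR) (use nr_summable[OF R1(2) R1(1)] in simp)
  qed
  then show ?thesis unfolding KF_def .
qed

lemma KFd_v:
  assumes u: "norm u < 1" and v: "norm v < 1"
  shows "((\<lambda>w. KF u (u * w)) has_field_derivative
    (\<Sum>b. phi (Suc b) u * (of_nat (Suc b) * (u * v) ^ b * u))) (at v)"
proof -
  define r where "r = (1 - norm v) / 2"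
  define R where "R = (1 + norm v) / 2"
  have r0: "r > 0" unfolding r_def using v by simp
  have R1: "R < 1" "0 \<le> R" unfolding R_def using v by auto
  have inb: "norm x \<le> R" if "x \<in> ball v r" for x using ball_half[OF v, of x] that unfolding r_def R_def by simp
  have inbu: "norm (u * x) \<le> R" if "x \<in> ball v r" for x
  proof -
    have "norm (u * x) = norm u * norm x" by (rule norm_mult)
    also have "\<dots> \<le> 1 * norm x" by (rule mult_right_mono) (use u in auto)
    finally show ?thesis using inb[OF that] by simp
  qed
  define A where "A = Cf * (\<Sum>n. norm u ^ n)"
  have phb: "norm (phi (Suc b) u) \<le> A" for b
    unfolding A_def by (rule phi_bd[OF order_refl u])
  have powb: "norm ((u * x) ^ k) \<le> R ^ k" if "x \<in> ball v r" for x k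
    unfolding norm_power by (rule power_mono[OF inbu[OF that] norm_ge_zero])
  have sR: "summable (\<lambda>b. R ^ Suc b)"
    using R1 summable_Suc_iff[of "\<lambda>b. R ^ b"] by (simp add: summable_geometric)
  have D: "((\<lambda>w. \<Sum>b. phi (Suc b) u * (u * w) ^ Suc b) has_field_derivative
    (\<Sum>b. phi (Suc b) u * (of_nat (Suc b) * (u * v) ^ b * u))) (at v)"
  proof (rule ser_deriv[OF r0, where M="\<lambda>b. A * R ^ Suc b" and N="\<lambda>b. A * (real (Suc b) * R ^ b * 1)"])
    show "((\<lambda>w. phi (Suc b) u * (u * w) ^ Suc b) has_field_derivative
        phi (Suc b) u * (of_nat (Suc b) * (u * x) ^ b * u)) (at x)" if "x \<in> ball v r" for b x
      by (rule DERIV_cmult[OF pow_lin_deriv2])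
    show "norm (phi (Suc b) u * (u * x) ^ Suc b) \<le> A * R ^ Suc b" if "x \<in> ball v r" for b x
      by (rule bnd_mult[OF phb powb[OF that]])
    show "norm (phi (Suc b) u * (of_nat (Suc b) * (u * x) ^ b * u)) \<le> A * (real (Suc b) * R ^ b * 1)"
      if "x \<in> ball v r" for b x
    proof (rule bnd_mult[OF phb])
      show "norm (of_nat (Suc b) * (u * x) ^ b * u) \<le> real (Suc b) * R ^ b * 1"
        by (rule bnd_mult[OF bnd_mult[OF _ powb[OF that]]]) (use u in \<open>simp_all only: norm_of_nat order_refl less_imp_le\<close>)
    qed
    show "summable (\<lambda>b. A * R ^ Suc b)" by (rule summable_mult[OF sR])
    show "summable (\<lambda>b. A * (real (Suc b) * R ^ b * 1))"
      by (intro summable_mult) (use nr_summable[OF R1(2) R1(1)] in simp)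
  qed
  then show ?thesis unfolding KF_def .
qed

lemma pow_deriv: "((\<lambda>w. w ^ Suc b) has_field_derivative (of_nat (Suc b) * w ^ b)) (at (w::complex))"
  using pow_lin_deriv1[of 1 b w] by simp

lemma E0d:
  assumes y: "norm y < 1"
  shows "((\<lambda>w. EE \<rho> q s (of_real q) w) has_field_derivative (\<Sum>b. gg (Suc b) * (of_nat (Suc b) * y ^ b))) (at y)"
proof -
  define r where "r = (1 - norm y) / 2"
  define R where "R = (1 + norm y) / 2"
  have r0: "r > 0" unfolding r_def using y by simp
  have R1: "R < 1" "0 \<le> R" unfolding R_def using y by auto
  have inb: "norm x \<le> R" if "x \<in> ball y r" for x using ball_half[OF y, of x] that unfolding r_def R_def by simp
  define A where "A = (\<Sum>n. q ^ n)"
  have gb: "norm (gg b) \<le> A" for b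
    unfolding A_def gg_def using psi_bd[of "of_real q" q b] q0 q1 by simp
  have powb: "norm (x ^ k) \<le> R ^ k" if "x \<in> ball y r" for x k
    unfolding norm_power by (rule power_mono[OF inb[OF that] norm_ge_zero])
  have sR: "summable (\<lambda>b. R ^ Suc b)"
    using R1 summable_Suc_iff[of "\<lambda>b. R ^ b"] by (simp add: summable_geometric)
  have D: "((\<lambda>w. \<Sum>b. gg (Suc b) * w ^ Suc b) has_field_derivative
    (\<Sum>b. gg (Suc b) * (of_nat (Suc b) * y ^ b))) (at y)"
  proof (rule ser_deriv[OF r0, where M="\<lambda>b. A * R ^ Suc b" and N="\<lambda>b. A * (real (Suc b) * R ^ b)"])
    show "((\<lambda>w. gg (Suc b) * w ^ Suc b) has_field_derivative gg (Suc b) * (of_nat (Suc b) * x ^ b)) (at x)"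
      if "x \<in> ball y r" for b x
      by (rule DERIV_cmult[OF pow_deriv])
    show "norm (gg (Suc b) * x ^ Suc b) \<le> A * R ^ Suc b" if "x \<in> ball y r" for b x
      by (rule bnd_mult[OF gb powb[OF that]])
    show "norm (gg (Suc b) * (of_nat (Suc b) * x ^ b)) \<le> A * (real (Suc b) * R ^ b)" if "x \<in> ball y r" for b x
      by (rule bnd_mult[OF gb bnd_mult[OF _ powb[OF that]]]) (simp only: norm_of_nat order_refl)
    show "summable (\<lambda>b. A * R ^ Suc b)" by (rule summable_mult[OF sR])
    show "summable (\<lambda>b. A * (real (Suc b) * R ^ b))"
      by (intro summable_mult) (use nr_summable[OF R1(2) R1(1)] in simp)
  qed
  show ?thesis
  proof (rule has_field_derivative_transform_within_open[OF D, of "ball 0 1"])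
    show "open (ball (0::complex) 1)" by simp
    show "y \<in> ball (0::complex) 1" using y by simp
    show "(\<Sum>b. gg (Suc b) * w ^ Suc b) = EE \<rho> q s (of_real q) w" if "w \<in> ball 0 1" for w
      using EE_q[of w] that by simp
  qed
qed

end


lemma core_alg:
  fixes A B u q w K0 K1 K2 G0 G1 t P P' s r :: complex
  assumes QE: "(A*u*(u-q) - B*u - u*u*(u-q)) * K1 + (A*u - u*u - u*(u-q)) * K0 + (A*(u-q) - B) * K2
       + (-u) * G0 + A * G1 = w*(G1 + (u-q)*K2 + G0 + (u-q)*K0) + t"
    and A: "A = 1 + r + s" and B: "B = r * (1 - q)"
    and P: "P = u^2 - (s + 1 + r + q) * u + s * q + r + q" and P': "P' = 2*u - (s + 1 + r + q)"
  shows "P*(u*K1+K2) + u*P'*K0 + (u-q)*w*K0 - (u-q)*(u-w)*K2 + t + (u+w)*G0 - (s+1+r-w)*G1 = 0"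
  using QE unfolding A B P P' by algebra

lemma zpt_alg:
  fixes A B u qq N ps ph dph g W :: complex
  assumes "A*(u*(ph + (u-qq)*dph) + N*(g + (u-qq)*ph)) = B*(u*dph + N*ph) + u*(u*(ph+(u-qq)*dph) + (g + (u-qq)*ph)) + N*ps"
  shows "N*ps*W = (A*u*(u-qq) - B*u - u*u*(u-qq))*(dph*W) + (A*u - u*u - u*(u-qq))*(ph*W) + (A*(u-qq) - B)*(N*ph*W) + (-u)*(g*W) + A*(N*g*W)"
  using assms by algebra

context qs begin

lemma main_qs:
  assumes u: "norm u < 1" and v: "norm v < 1" and u0: "u \<noteq> 0" and P0: "PP \<rho> q s u \<noteq> 0"
  shows "(\<lambda>w. Phi \<rho> q s w v) field_differentiable at u
       \<and> (\<lambda>w. Phi \<rho> q s u w) field_differentiable at v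
       \<and> deriv (\<lambda>w. Phi \<rho> q s w v) u
         - (u - of_real q) / PP \<rho> q s u * v * (1 - v) * deriv (\<lambda>w. Phi \<rho> q s u w) v
         + calL \<rho> q s u v = 0
       \<and> calL \<rho> q s u v = (1 - v) * (v / (1 - u) + (1 + v) * EE \<rho> q s (of_real q) (u * v)
           - v * (s + 1 + of_real \<rho> - u * v) * deriv (\<lambda>w. EE \<rho> q s (of_real q) w) (u * v))"
proof -
  define w where "w = u * v"
  have nw: "norm w < 1"
  proof -
    have "norm w = norm u * norm v" unfolding w_def by (rule norm_mult)
    also have "\<dots> \<le> norm u * 1" by (rule mult_left_mono) (use v in auto)
    finally show ?thesis using u by simp
  qed
  have u1: "1 - u \<noteq> 0" using u by auto
  define P where "P = PP \<rho> q s u"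
  define P' where "P' = 2 * u - (s + 1 + of_real \<rho> + of_real q)"
  define D1 where "D1 = (\<Sum>b. phi (Suc b) u * (of_nat (Suc b) * (u * v) ^ b * v) + dphi (Suc b) u * (u * v) ^ Suc b)"
  define D2 where "D2 = (\<Sum>b. phi (Suc b) u * (of_nat (Suc b) * (u * v) ^ b * u))"
  define D3 where "D3 = (\<Sum>b. gg (Suc b) * (of_nat (Suc b) * w ^ b))"
  define K0 where "K0 = KF u w"
  define K1 where "K1 = (\<Sum>b. dphi (Suc b) u * w ^ Suc b)"
  define K2 where "K2 = (\<Sum>b. of_nat (Suc b) * phi (Suc b) u * w ^ Suc b)"
  define G0 where "G0 = EE \<rho> q s (of_real q) w"
  define G1 where "G1 = (\<Sum>b. of_nat (Suc b) * gg (Suc b) * w ^ Suc b)"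
  have dPu: "((\<lambda>x. Phi \<rho> q s x v) has_field_derivative (P * (1 - v) * D1 + P' * (1 - v) * K0)) (at u)"
  proof -
    have a: "((\<lambda>x. PP \<rho> q s x * (1 - v)) has_field_derivative P' * (1 - v)) (at u)"
      unfolding P'_def by (rule DERIV_cmult_right[OF PP_deriv])
    have b: "((\<lambda>x. PP \<rho> q s x * (1 - v) * KF x (x * v)) has_field_derivative (P * (1 - v) * D1 + P' * (1 - v) * K0)) (at u)"
      unfolding P_def D1_def K0_def w_def by (rule DERIV_mult'[OF a KFd_u[OF u v]])
    show ?thesis
    proof (rule has_field_derivative_transform_within_open[OF b, of "ball 0 1"])
      show "open (ball (0::complex) 1)" by simp
      show "u \<in> ball 0 1" using u by simp
      fix x :: complex assume "x \<in> ball 0 1"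
      then have x: "norm x < 1" by simp
      have xv: "norm (x * v) < 1"
      proof -
        have "norm (x * v) = norm x * norm v" by (rule norm_mult)
        also have "\<dots> \<le> norm x * 1" by (rule mult_left_mono) (use v in auto)
        finally show ?thesis using x by simp
      qed
      show "PP \<rho> q s x * (1 - v) * KF x (x * v) = Phi \<rho> q s x v"
        unfolding Phi_def FF_eq[OF x xv] ..
    qed
  qed
  have dPv: "((\<lambda>y. Phi \<rho> q s u y) has_field_derivative (P * (1 - v) * D2 + (- P) * K0)) (at v)"
  proof -
    have a: "((\<lambda>y. PP \<rho> q s u * (1 - y)) has_field_derivative - P) (at v)"
      unfolding P_def by (auto intro!: derivative_eq_intros)
    have b: "((\<lambda>y. PP \<rho> q s u * (1 - y) * KF u (u * y)) has_field_derivative (P * (1 - v) * D2 + (- P) * K0)) (at v)"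
      unfolding P_def D2_def K0_def w_def by (rule DERIV_mult'[OF a[unfolded P_def] KFd_v[OF u v]])
    show ?thesis
    proof (rule has_field_derivative_transform_within_open[OF b, of "ball 0 1"])
      show "open (ball (0::complex) 1)" by simp
      show "v \<in> ball 0 1" using v by simp
      fix y :: complex assume "y \<in> ball 0 1"
      then have y: "norm y < 1" by simp
      have uy: "norm (u * y) < 1"
      proof -
        have "norm (u * y) = norm u * norm y" by (rule norm_mult)
        also have "\<dots> \<le> 1 * norm y" by (rule mult_right_mono) (use u in auto)
        finally show ?thesis using y by simp
      qed
      show "PP \<rho> q s u * (1 - y) * KF u (u * y) = Phi \<rho> q s u y"
        unfolding Phi_def FF_eq[OF u uy] ..
    qed
  qed
  have dE: "((\<lambda>y. EE \<rho> q s (of_real q) y) has_field_derivative D3) (at w)"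
    unfolding D3_def by (rule E0d[OF nw])
  have derPu: "deriv (\<lambda>x. Phi \<rho> q s x v) u = P * (1 - v) * D1 + P' * (1 - v) * K0"
    by (rule DERIV_imp_deriv[OF dPu])
  have derPv: "deriv (\<lambda>y. Phi \<rho> q s u y) v = P * (1 - v) * D2 + (- P) * K0"
    by (rule DERIV_imp_deriv[OF dPv])
  have derE: "deriv (\<lambda>y. EE \<rho> q s (of_real q) y) w = D3"
    by (rule DERIV_imp_deriv[OF dE])
  define Au where "Au = Cf * (\<Sum>n. norm u ^ n)"
  define Adu where "Adu = Cf * (\<Sum>n. real (Suc n) * norm u ^ n)"
  define Ag where "Ag = (\<Sum>n. q ^ n)"
  have phb: "norm (phi b u) \<le> Au" for b unfolding Au_def by (rule phi_bd[OF order_refl u])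
  have dphb: "norm (dphi b u) \<le> Adu" for b unfolding Adu_def by (rule dphi_bd[OF order_refl u])
  have gb: "norm (gg b) \<le> Ag" for b
    unfolding Ag_def gg_def using psi_bd[of "of_real q" q b] q0 q1 by simp
  have wp: "norm (w ^ Suc b) \<le> real (Suc b) * norm w ^ b" for b
  proof -
    have "norm (w ^ Suc b) = norm w * norm w ^ b" by (simp add: norm_mult norm_power)
    also have "\<dots> \<le> 1 * norm w ^ b" by (rule mult_right_mono) (use nw in auto)
    also have "\<dots> \<le> real (Suc b) * norm w ^ b" by (rule mult_right_mono) auto
    finally show ?thesis .
  qed
  have wp': "norm (of_nat (Suc b) * w ^ Suc b) \<le> real (Suc b) * norm w ^ b" for b
  proof -
    have "norm (of_nat (Suc b) * w ^ Suc b) = real (Suc b) * (norm w * norm w ^ b)"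
      by (simp only: norm_mult norm_power norm_of_nat power_Suc)
    also have "\<dots> \<le> real (Suc b) * (1 * norm w ^ b)"
      by (intro mult_left_mono mult_right_mono) (use nw in auto)
    finally show ?thesis by simp
  qed
  have nw0: "0 \<le> norm w" by simp
  have sK1: "summable (\<lambda>b. dphi (Suc b) u * w ^ Suc b)"
    by (rule sumb[OF _ nw0 nw, where C=Adu]) (rule bnd_mult[OF dphb wp])
  have sK2: "summable (\<lambda>b. of_nat (Suc b) * phi (Suc b) u * w ^ Suc b)"
  proof (rule sumb[OF _ nw0 nw, where C=Au])
    fix b
    have "norm (of_nat (Suc b) * phi (Suc b) u * w ^ Suc b) = norm (phi (Suc b) u * (of_nat (Suc b) * w ^ Suc b))"
      by (simp add: algebra_simps)
    also have "\<dots> \<le> Au * (real (Suc b) * norm w ^ b)" by (rule bnd_mult[OF phb wp'])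
    finally show "norm (of_nat (Suc b) * phi (Suc b) u * w ^ Suc b) \<le> Au * (real (Suc b) * norm w ^ b)" .
  qed
  have sK0: "summable (\<lambda>b. phi (Suc b) u * w ^ Suc b)"
    by (rule sumb[OF _ nw0 nw, where C=Au]) (rule bnd_mult[OF phb wp])
  have sG0: "summable (\<lambda>b. gg (Suc b) * w ^ Suc b)"
    by (rule sumb[OF _ nw0 nw, where C=Ag]) (rule bnd_mult[OF gb wp])
  have sG1: "summable (\<lambda>b. of_nat (Suc b) * gg (Suc b) * w ^ Suc b)"
  proof (rule sumb[OF _ nw0 nw, where C=Ag])
    fix b
    have "norm (of_nat (Suc b) * gg (Suc b) * w ^ Suc b) = norm (gg (Suc b) * (of_nat (Suc b) * w ^ Suc b))"
      by (simp add: algebra_simps)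
    also have "\<dots> \<le> Ag * (real (Suc b) * norm w ^ b)" by (rule bnd_mult[OF gb wp'])
    finally show "norm (of_nat (Suc b) * gg (Suc b) * w ^ Suc b) \<le> Ag * (real (Suc b) * norm w ^ b)" .
  qed
  have SK0: "(\<lambda>b. phi (Suc b) u * w ^ Suc b) sums K0" unfolding K0_def KF_def by (rule summable_sums[OF sK0])
  have SK1: "(\<lambda>b. dphi (Suc b) u * w ^ Suc b) sums K1" unfolding K1_def by (rule summable_sums[OF sK1])
  have SK2: "(\<lambda>b. of_nat (Suc b) * phi (Suc b) u * w ^ Suc b) sums K2" unfolding K2_def by (rule summable_sums[OF sK2])
  have SG0: "(\<lambda>b. gg (Suc b) * w ^ Suc b) sums G0" unfolding G0_def EE_q[OF nw] by (rule summable_sums[OF sG0])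
  have SG1: "(\<lambda>b. of_nat (Suc b) * gg (Suc b) * w ^ Suc b) sums G1" unfolding G1_def by (rule summable_sums[OF sG1])
  have D1eq: "u * D1 = u * K1 + K2"
  proof -
    have "(\<lambda>b. (u * (dphi (Suc b) u * w ^ Suc b) + of_nat (Suc b) * phi (Suc b) u * w ^ Suc b) / u) sums ((u * K1 + K2) / u)"
      by (intro sums_divide sums_add sums_mult SK1 SK2)
    moreover have "(\<lambda>b. (u * (dphi (Suc b) u * w ^ Suc b) + of_nat (Suc b) * phi (Suc b) u * w ^ Suc b) / u)
        = (\<lambda>b. phi (Suc b) u * (of_nat (Suc b) * (u * v) ^ b * v) + dphi (Suc b) u * (u * v) ^ Suc b)"
      by (rule ext) (use u0 in \<open>simp add: w_def field_simps\<close>)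
    ultimately have "D1 = (u * K1 + K2) / u" unfolding D1_def by (simp add: sums_iff)
    then show ?thesis using u0 by simp
  qed
  have D2eq: "v * D2 = K2"
  proof -
    have sD2: "summable (\<lambda>b. phi (Suc b) u * (of_nat (Suc b) * (u * v) ^ b * u))"
    proof (rule sumb[OF _ nw0 nw, where C=Au])
      fix b
      have "norm (of_nat (Suc b) * (u * v) ^ b * u) \<le> real (Suc b) * norm w ^ b"
      proof -
        have "norm (of_nat (Suc b) * (u * v) ^ b * u) = real (Suc b) * norm w ^ b * norm u"
          unfolding w_def by (simp only: norm_mult norm_power norm_of_nat)
        also have "\<dots> \<le> real (Suc b) * norm w ^ b * 1" by (rule mult_left_mono) (use u in auto)
        finally show ?thesis by simp
      qed
      then show "norm (phi (Suc b) u * (of_nat (Suc b) * (u * v) ^ b * u)) \<le> Au * (real (Suc b) * norm w ^ b)"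
        by (rule bnd_mult[OF phb])
    qed
    have "v * D2 = (\<Sum>b. v * (phi (Suc b) u * (of_nat (Suc b) * (u * v) ^ b * u)))"
      unfolding D2_def by (rule suminf_mult[OF sD2, symmetric])
    also have "\<dots> = K2" unfolding K2_def w_def by (rule suminf_cong) (simp add: algebra_simps)
    finally show ?thesis .
  qed
  have D3eq: "w * D3 = G1"
  proof -
    have sD3: "summable (\<lambda>b. gg (Suc b) * (of_nat (Suc b) * w ^ b))"
      by (rule sumb[OF _ nw0 nw, where C=Ag]) (rule bnd_mult[OF gb], simp only: norm_mult norm_power norm_of_nat order_refl)
    have "w * D3 = (\<Sum>b. w * (gg (Suc b) * (of_nat (Suc b) * w ^ b)))"
      unfolding D3_def by (rule suminf_mult[OF sD3, symmetric])
    also have "\<dots> = G1" unfolding G1_def by (rule suminf_cong) (simp add: algebra_simps)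
    finally show ?thesis .
  qed
  define A where "A = of_real (1 + \<rho>) + s"
  define B :: complex where "B = of_real \<rho> * of_real (1 - q)"
  define qq :: complex where "qq = of_real q"
  define Z where "Z b = of_nat (Suc b) * psi b u * w ^ Suc b" for b
  have Zpt: "Z b = (A*u*(u-qq) - B*u - u*u*(u-qq)) * (dphi (Suc b) u * w ^ Suc b)
      + (A*u - u*u - u*(u-qq)) * (phi (Suc b) u * w ^ Suc b)
      + (A*(u-qq) - B) * (of_nat (Suc b) * phi (Suc b) u * w ^ Suc b)
      + (-u) * (gg (Suc b) * w ^ Suc b) + A * (of_nat (Suc b) * gg (Suc b) * w ^ Suc b)" for b
  proof -
    have o: "A * (u * dpsi (Suc b) u + of_nat (Suc b) * psi (Suc b) u) =
      B * (u * dphi (Suc b) u + of_nat (Suc b) * phi (Suc b) u)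
      + u * (u * dpsi (Suc b) u + psi (Suc b) u) + of_nat (Suc b) * psi b u"
      using ode[of "Suc b" u] u unfolding A_def B_def by simp
    have r1: "dpsi (Suc b) u = phi (Suc b) u + (u - qq) * dphi (Suc b) u" unfolding qq_def by (rule dpsi_rel[OF u])
    have r2: "psi (Suc b) u = gg (Suc b) + (u - qq) * phi (Suc b) u" unfolding qq_def by (rule psi_rel[OF u])
    show ?thesis unfolding Z_def by (rule zpt_alg[OF o[unfolded r1 r2]])
  qed
  have SZ: "Z sums ((A*u*(u-qq) - B*u - u*u*(u-qq)) * K1 + (A*u - u*u - u*(u-qq)) * K0 + (A*(u-qq) - B) * K2
       + (-u) * G0 + A * G1)"
    unfolding Zpt by (intro sums_add sums_mult SK0 SK1 SK2 SG0 SG1)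
  have SZ': "Z sums (w*(G1 + (u-qq)*K2 + G0 + (u-qq)*K0) + w / (1 - u))"
  proof -
    have "(\<lambda>b. Z (Suc b)) sums (w*(G1 + (u-qq)*K2 + G0 + (u-qq)*K0))"
    proof -
      have "(\<lambda>b. w * (of_nat (Suc b) * gg (Suc b) * w ^ Suc b + (u - qq) * (of_nat (Suc b) * phi (Suc b) u * w ^ Suc b)
           + gg (Suc b) * w ^ Suc b + (u - qq) * (phi (Suc b) u * w ^ Suc b))) sums (w*(G1 + (u-qq)*K2 + G0 + (u-qq)*K0))"
        by (intro sums_add sums_mult SK0 SK2 SG0 SG1)
      moreover have "(\<lambda>b. w * (of_nat (Suc b) * gg (Suc b) * w ^ Suc b + (u - qq) * (of_nat (Suc b) * phi (Suc b) u * w ^ Suc b)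
           + gg (Suc b) * w ^ Suc b + (u - qq) * (phi (Suc b) u * w ^ Suc b))) = (\<lambda>b. Z (Suc b))"
      proof
        fix b
        have r2: "psi (Suc b) u = gg (Suc b) + (u - qq) * phi (Suc b) u" unfolding qq_def by (rule psi_rel[OF u])
        show "w * (of_nat (Suc b) * gg (Suc b) * w ^ Suc b + (u - qq) * (of_nat (Suc b) * phi (Suc b) u * w ^ Suc b)
           + gg (Suc b) * w ^ Suc b + (u - qq) * (phi (Suc b) u * w ^ Suc b)) = Z (Suc b)"
          unfolding Z_def r2 by (simp add: algebra_simps)
      qed
      ultimately show ?thesis by simp
    qed
    moreover have "Z 0 = w / (1 - u)" unfolding Z_def psi0[OF u] by simp
    ultimately show ?thesis using sums_Suc_iff[of Z] by simp
  qed
  have QE: "(A*u*(u-qq) - B*u - u*u*(u-qq)) * K1 + (A*u - u*u - u*(u-qq)) * K0 + (A*(u-qq) - B) * K2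
       + (-u) * G0 + A * G1 = w*(G1 + (u-qq)*K2 + G0 + (u-qq)*K0) + w / (1 - u)"
    by (rule sums_unique2[OF SZ SZ'])
  have br: "P*(u*K1+K2) + u*P'*K0 + (u-qq)*w*K0 - (u-qq)*(u-w)*K2 + w / (1 - u) + (u+w)*G0 - (s+1+ of_real \<rho> - w)*G1 = 0"
  proof (rule core_alg[OF QE])
    show "A = 1 + of_real \<rho> + s" unfolding A_def by simp
    show "B = of_real \<rho> * (1 - qq)" unfolding B_def qq_def by simp
    show "P = u\<^sup>2 - (s + 1 + of_real \<rho> + qq) * u + s * qq + of_real \<rho> + qq" unfolding P_def PP_def qq_def ..
    show "P' = 2 * u - (s + 1 + of_real \<rho> + qq)" unfolding P'_def qq_def ..
  qed
  define Lc where "Lc = calL \<rho> q s u v"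
  have Lc_eq: "u * Lc = (1 - v) * (w / (1 - u) + (u + w) * G0 - (s + 1 + of_real \<rho> - w) * G1)"
  proof -
    have "u * Lc = (1 - v) * LL \<rho> q s u w" unfolding Lc_def calL_def w_def using u0 by simp
    also have "LL \<rho> q s u w = w / (1 - u) + (u + w) * G0 - (s + 1 + of_real \<rho> - w) * (w * D3)"
      unfolding LL_def G0_def derE by (simp add: algebra_simps)
    finally show ?thesis unfolding D3eq .
  qed
  define TT where "TT = deriv (\<lambda>w. Phi \<rho> q s w v) u
         - (u - of_real q) / PP \<rho> q s u * v * (1 - v) * deriv (\<lambda>w. Phi \<rho> q s u w) v + Lc"
  have "u * TT = (1 - v) * (P*(u*K1+K2) + u*P'*K0 + (u-qq)*w*K0 - (u-qq)*(u-w)*K2 + w / (1 - u) + (u+w)*G0 - (s+1+ of_real \<rho> - w)*G1)"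
  proof -
    have e1: "u * deriv (\<lambda>x. Phi \<rho> q s x v) u = (1 - v) * (P * (u * K1 + K2) + u * P' * K0)"
    proof -
      have "u * (P * (1 - v) * D1 + P' * (1 - v) * K0) = (1 - v) * (P * (u * D1) + u * P' * K0)"
        by (simp add: algebra_simps)
      then show ?thesis unfolding derPu D1eq .
    qed
    have e2: "u * ((u - of_real q) / PP \<rho> q s u * v * (1 - v) * deriv (\<lambda>w. Phi \<rho> q s u w) v)
        = (1 - v) * ((u - qq) * (u - w) * K2 - (u - qq) * w * K0)"
    proof -
      have "u * ((u - of_real q) / PP \<rho> q s u * v * (1 - v) * deriv (\<lambda>w. Phi \<rho> q s u w) v)
          = u * ((u - qq) / P * v * (1 - v) * (P * (1 - v) * D2 + (- P) * K0))"
        unfolding derPv P_def qq_def ..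
      also have "\<dots> = (1 - v) * ((u - qq) * ((1 - v) * u) * (v * D2) - (u - qq) * (u * v) * K0)"
        using P0 unfolding P_def by (simp add: field_simps)
      also have "\<dots> = (1 - v) * ((u - qq) * (u - w) * K2 - (u - qq) * w * K0)"
        unfolding D2eq w_def by (simp add: algebra_simps)
      finally show ?thesis .
    qed
    have "u * TT = u * deriv (\<lambda>x. Phi \<rho> q s x v) u - u * ((u - of_real q) / PP \<rho> q s u * v * (1 - v) * deriv (\<lambda>w. Phi \<rho> q s u w) v) + u * Lc"
      unfolding TT_def by (simp add: algebra_simps)
    also have "\<dots> = (1 - v) * (P*(u*K1+K2) + u*P'*K0 + (u-qq)*w*K0 - (u-qq)*(u-w)*K2 + w / (1 - u) + (u+w)*G0 - (s+1+ of_real \<rho> - w)*G1)"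
      unfolding e1 e2 Lc_eq by (simp add: algebra_simps)
    finally show ?thesis .
  qed
  then have "u * TT = 0" unfolding br by simp
  then have TT0: "TT = 0" using u0 by simp
  have c4: "calL \<rho> q s u v = (1 - v) * (v / (1 - u) + (1 + v) * EE \<rho> q s (of_real q) (u * v)
           - v * (s + 1 + of_real \<rho> - u * v) * deriv (\<lambda>w. EE \<rho> q s (of_real q) w) (u * v))"
    unfolding calL_def LL_def using u0 u1 by (simp add: field_simps)
  have f1: "(\<lambda>w. Phi \<rho> q s w v) field_differentiable at u"
    unfolding field_differentiable_def using dPu by blast
  have f2: "(\<lambda>w. Phi \<rho> q s u w) field_differentiable at v"
    unfolding field_differentiable_def using dPv by blast
  show ?thesis using f1 f2 TT0 c4 unfolding TT_def Lc_def by simp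
qed

end


theorem mainTheorem5:
  fixes \<rho> q :: real and s u v :: complex
  assumes "\<rho> > 0" and "0 < q" and "q < 1" and "\<rho> + q < 1"
    and "Re s \<ge> 0"
    and "norm u < 1" and "norm v < 1" and "u \<noteq> 0"
    and "PP \<rho> q s u \<noteq> 0"
  shows "(\<lambda>w. Phi \<rho> q s w v) field_differentiable at u
       \<and> (\<lambda>w. Phi \<rho> q s u w) field_differentiable at v
       \<and> deriv (\<lambda>w. Phi \<rho> q s w v) u
         - (u - of_real q) / PP \<rho> q s u * v * (1 - v) * deriv (\<lambda>w. Phi \<rho> q s u w) v
         + calL \<rho> q s u v = 0
       \<and> calL \<rho> q s u v = (1 - v) * (v / (1 - u) + (1 + v) * EE \<rho> q s (of_real q) (u * v)
           - v * (s + 1 + of_real \<rho> - u * v) * deriv (\<lambda>w. EE \<rho> q s (of_real q) w) (u * v))"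
proof -
  interpret qs \<rho> q s by unfold_locales (use assms in auto)
  show ?thesis by (rule main_qs) (use assms in auto)
qed

end
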